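(* Let $n\ge 3$. For the Grassmannian ${\rm Gr}(3,n)$, the block diagonal matching field polytopes $P_{\mathcal{B}_0}$ and $P_{\mathcal{B}_1}$ can be obtained from one another by a sequence of combinatorial mutations.
   Context: For $k=3$: for each $3$-subset $I=\{i_1<i_2<i_3\}$ of $[n]$ a matching field assigns $\sigma=\Lambda(I)\in S_3$; its polytope $P_\Lambda\subset\mathbb{R}^{3\times n}$ is the convex hull of the vectors $\sum_{r=1}^3 e_{\sigma(r),i_r}$ ($e_{i,j}$ the standard basis matrices). For $0\le\ell\le n$, the block diagonal matching field $\mathcal{B}_\ell$ has $\mathcal{B}_\ell(I)=\mathrm{id}$ if $|I\cap\{1,\dots,\ell\}|\ne1$ and $(12)$ otherwise. Combinatorial mutation: with $N\cong\mathbb{Z}^d$, $M$ its dual, $w\in M$ primitive and $F\subset w^\perp\subset N_\mathbb{R}$ a lattice polytope, the tropical map is $\varphi_{w,F}(u)=u-(\min_{f\in F}\langle f,u\rangle)w$; if $P\subset M_\mathbb{R}$ is a lattice polytope containing the origin and $\varphi_{w,F}(P)$ is convex, it is a combinatorial mutation of $P$. A sequence of combinatorial mutations is a finite chain of polytopes in which consecutive polytopes are related, after identification via lattice-preserving affine isomorphisms (unimodular equivalences) of the lattices they span, either by a unimodular equivalence or by a combinatorial mutation. *)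

theory Defs
  imports "HOL-Analysis.Analysis" "HOL-Analysis.Finite_Function_Topology"
    "HOL-Combinatorics.Transposition"
begin

text \<open>Points of the real vector spaces R^d are finitely supported functions
  finitely supported real functions on nat; R^d is the set of those supported in {0..<d}.\<close>

type_synonym pt = "nat \<Rightarrow>\<^sub>0 real"

definition rsp :: "nat \<Rightarrow> pt set" where
  "rsp d = {x. \<forall>i\<ge>d. Poly_Mapping.lookup x i = 0}"

definition intpt :: "pt \<Rightarrow> bool" where
  "intpt x \<longleftrightarrow> (\<forall>i. Poly_Mapping.lookup x i \<in> \<int>)"

definition lat :: "nat \<Rightarrow> pt set" where
  "lat d = {x \<in> rsp d. intpt x}"

definition lattice_polytope_in :: "nat \<Rightarrow> pt set \<Rightarrow> bool" where
  "lattice_polytope_in d P \<longleftrightarrow>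
     (\<exists>V. finite V \<and> V \<noteq> {} \<and> V \<subseteq> lat d \<and> P = convex hull V)"

definition lattice_polytope :: "pt set \<Rightarrow> bool" where
  "lattice_polytope P \<longleftrightarrow> (\<exists>d. lattice_polytope_in d P)"

definition alat :: "pt set \<Rightarrow> pt set" where
  "alat P = {x. \<exists>S c. finite S \<and> S \<subseteq> {v \<in> P. intpt v} \<and>
                 (\<forall>v\<in>S. c v \<in> \<int>) \<and> sum c S = 1 \<and> x = (\<Sum>v\<in>S. c v *\<^sub>R v)}"

definition unimod_equiv :: "pt set \<Rightarrow> pt set \<Rightarrow> bool" where
  "unimod_equiv P Q \<longleftrightarrow>
     (\<exists>f b. linear f \<and> bij_betw (\<lambda>x. f x + b) (alat P) (alat Q) \<and>
            (\<lambda>x. f x + b) ` P = Q)"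

definition pair :: "nat \<Rightarrow> pt \<Rightarrow> pt \<Rightarrow> real" where
  "pair d f u = (\<Sum>i<d. Poly_Mapping.lookup f i * Poly_Mapping.lookup u i)"

definition primitive :: "nat \<Rightarrow> pt \<Rightarrow> bool" where
  "primitive d w \<longleftrightarrow> w \<in> lat d \<and> w \<noteq> 0 \<and>
     (\<forall>v\<in>lat d. \<forall>k::nat. w = real k *\<^sub>R v \<longrightarrow> k = 1)"

definition trop_map :: "nat \<Rightarrow> pt \<Rightarrow> pt set \<Rightarrow> pt \<Rightarrow> pt" where
  "trop_map d w F u = u - (Inf ((\<lambda>f. pair d f u) ` F)) *\<^sub>R w"

definition comb_mutation :: "nat \<Rightarrow> pt set \<Rightarrow> pt set \<Rightarrow> bool" where
  "comb_mutation d Q Q' \<longleftrightarrow>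
     lattice_polytope_in d Q \<and> 0 \<in> Q \<and>
     (\<exists>w F. primitive d w \<and> lattice_polytope_in d F \<and>
            (\<forall>f\<in>F. pair d f w = 0) \<and>
            convex (trop_map d w F ` Q) \<and> Q' = trop_map d w F ` Q)"

text \<open>P' arises from P by a combinatorial mutation after identifying the lattice
  spanned by P with M = Z^d (and the lattice spanned by P' with that of the image).\<close>
definition mutation_step :: "pt set \<Rightarrow> pt set \<Rightarrow> bool" where
  "mutation_step P P' \<longleftrightarrow>
     (\<exists>d Q Q'. alat Q = lat d \<and> unimod_equiv P Q \<and> comb_mutation d Q Q' \<and>
               unimod_equiv P' Q')"

definition related :: "pt set \<Rightarrow> pt set \<Rightarrow> bool" where
  "related P P' \<longleftrightarrow> unimod_equiv P P' \<or> mutation_step P P' \<or> mutation_step P' P"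

definition mutation_sequence_equiv :: "pt set \<Rightarrow> pt set \<Rightarrow> bool" where
  "mutation_sequence_equiv P P' \<longleftrightarrow>
     (\<exists>Ps. Ps \<noteq> [] \<and> hd Ps = P \<and> last Ps = P' \<and>
           (\<forall>Q\<in>set Ps. lattice_polytope Q) \<and>
           (\<forall>i. Suc i < length Ps \<longrightarrow> related (Ps ! i) (Ps ! Suc i)))"

text \<open>Matching fields for k = 3.  Rows 1,2,3 and columns 1..n are 0-based; the
  matrix entry (i,j) of R^{3 x n} is coordinate i*n + j.  A 3-subset I of [n] is
  a 3-subset of {0..<n}; i_r is the r-th smallest element (r = 0,1,2); a
  permutation of S_3 is a permutation of {0,1,2}.\<close>

definition emat :: "nat \<Rightarrow> nat \<Rightarrow> nat \<Rightarrow> pt" where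
  "emat n i j = Poly_Mapping.single (i * n + j) 1"

definition mf_vertex :: "nat \<Rightarrow> (nat \<Rightarrow> nat) \<Rightarrow> nat set \<Rightarrow> pt" where
  "mf_vertex n \<sigma> I = (\<Sum>r<3. emat n (\<sigma> r) (sorted_list_of_set I ! r))"

definition matching_field_polytope :: "nat \<Rightarrow> (nat set \<Rightarrow> (nat \<Rightarrow> nat)) \<Rightarrow> pt set" where
  "matching_field_polytope n \<Lambda> =
     convex hull {mf_vertex n (\<Lambda> I) I | I. I \<subseteq> {0..<n} \<and> card I = 3}"

text \<open>Block diagonal matching field B_l: I \<inter> {1..l} in 1-based terms is
  I \<inter> {0..<l} here; (12) is the transposition of rows 0 and 1.\<close>
definition block_mf :: "nat \<Rightarrow> nat set \<Rightarrow> (nat \<Rightarrow> nat)" where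
  "block_mf l I = (if card (I \<inter> {0..<l}) \<noteq> 1 then id else Transposition.transpose (0::nat) 1)"

end

theory Submission
  imports Defs
begin


lemma lookup_scaleR[simp]: "Poly_Mapping.lookup (r *\<^sub>R x) i = r * Poly_Mapping.lookup x i"
proof -
  have "finite {i. r * Poly_Mapping.lookup x i \<noteq> 0}"
    by (rule finite_subset[OF _ finite_lookup[of x]]) auto
  then show ?thesis unfolding scaleR_poly_mapping_def by simp
qed

declare lookup_add[simp] lookup_minus[simp] lookup_sum[simp]

abbreviation lk :: "pt \<Rightarrow> nat \<Rightarrow> real" where "lk \<equiv> Poly_Mapping.lookup"

definition mk :: "(nat \<Rightarrow> real) \<Rightarrow> nat \<Rightarrow> pt" where
  "mk F N = Abs_poly_mapping (\<lambda>k. if k < N then F k else 0)"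

lemma lookup_mk[simp]: "lk (mk F N) k = (if k < N then F k else 0)"
proof -
  have "finite {k. (if k < N then F k else 0) \<noteq> 0}"
    by (rule finite_subset[of _ "{..<N}"]) auto
  then show ?thesis unfolding mk_def by simp
qed

lemma rsp_lk: "u \<in> rsp N \<Longrightarrow> N \<le> i \<Longrightarrow> lk u i = 0"
  by (simp add: rsp_def)

lemma mk_rsp[simp]: "mk F N \<in> rsp N"
  by (simp add: rsp_def)

definition ind :: "bool \<Rightarrow> real" where "ind b = (if b then 1 else 0)"

lemma ind_simps[simp]: "ind True = 1" "ind False = 0" by (simp_all add: ind_def)

context fixes m :: nat begin

definition tn :: "nat \<Rightarrow> nat" where "tn k = (if Suc k < m then m + Suc k else 3*m)"

definition H :: "nat \<Rightarrow> pt set" where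
 "H j = {u \<in> rsp (3*m).
    (\<forall>i<3*m. 0 \<le> lk u i \<and> lk u i \<le> 1) \<and>
    (\<forall>i i'. i \<le> i' \<longrightarrow> i' < m \<longrightarrow> lk u i' \<le> lk u i \<and> lk u (m+i') \<le> lk u (m+i) \<and> lk u (2*m+i') \<le> lk u (2*m+i)) \<and>
    (\<forall>i<m. lk u (m+i) \<le> lk u (2*m+i)) \<and>
    (\<forall>k<m. j \<le> k \<longrightarrow> lk u k \<le> lk u (m+k)) \<and>
    (\<forall>k<m. k < j \<longrightarrow> (\<forall>i\<le>k. lk u k + lk u (m+i) \<le> lk u (2*m+i) + lk u (tn k)))}"

definition g :: "nat \<Rightarrow> pt \<Rightarrow> real" where "g k u = lk u (tn k) - lk u k"

definition W :: "nat \<Rightarrow> pt" where "W k = mk (\<lambda>i. if m \<le> i \<and> i \<le> m + k then 1 else 0) (3*m)"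

definition phi :: "nat \<Rightarrow> pt \<Rightarrow> pt" where "phi k u = u + min 0 (g k u) *\<^sub>R W k"
definition psi :: "nat \<Rightarrow> pt \<Rightarrow> pt" where "psi k u = u - min 0 (g k u) *\<^sub>R W k"

lemma lk_W: "k < m \<Longrightarrow> lk (W k) i = (if m \<le> i \<and> i \<le> m + k then 1 else 0)"
  by (simp add: W_def)

lemma W_tn: "k < m \<Longrightarrow> lk (W k) (tn k) = 0"
  by (simp add: W_def tn_def)

lemma W_k: "k < m \<Longrightarrow> lk (W k) k = 0"
  by (simp add: W_def)

lemma g_phi: "k < m \<Longrightarrow> g k (phi k u) = g k u"
  by (simp add: g_def phi_def W_tn W_k)

lemma g_psi: "k < m \<Longrightarrow> g k (psi k u) = g k u"
  by (simp add: g_def psi_def W_tn W_k)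

lemma phi_psi: "k < m \<Longrightarrow> phi k (psi k u) = u"
  by (simp add: phi_def g_psi) (simp add: psi_def)

lemma tn_val: "u \<in> rsp (3*m) \<Longrightarrow> lk u (tn k) = (if Suc k < m then lk u (m + Suc k) else 0)"
  by (simp add: tn_def rsp_lk)

lemma step1:
  assumes k: "k < m" and u: "u \<in> H k"
  shows "phi k u \<in> H (Suc k)"
proof -
  define \<delta> where "\<delta> = min 0 (g k u)"
  have ursp: "u \<in> rsp (3*m)" using u by (simp add: H_def)
  have B: "\<And>i. i<3*m \<Longrightarrow> 0 \<le> lk u i \<and> lk u i \<le> 1" using u by (simp add: H_def)
  have C: "\<And>i i'. i \<le> i' \<Longrightarrow> i' < m \<Longrightarrow> lk u i' \<le> lk u i \<and> lk u (m+i') \<le> lk u (m+i) \<and> lk u (2*m+i') \<le> lk u (2*m+i)"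
    using u by (simp add: H_def)
  have TZ: "\<And>i. i<m \<Longrightarrow> lk u (m+i) \<le> lk u (2*m+i)" using u by (simp add: H_def)
  have XT: "\<And>k'. k'<m \<Longrightarrow> k \<le> k' \<Longrightarrow> lk u k' \<le> lk u (m+k')" using u by (simp add: H_def)
  have F: "\<And>k' i. k'<m \<Longrightarrow> k' < k \<Longrightarrow> i \<le> k' \<Longrightarrow> lk u k' + lk u (m+i) \<le> lk u (2*m+i) + lk u (tn k')"
    using u by (simp add: H_def)
  define tv where "tv = lk u (tn k)"
  have tv: "tv = (if Suc k < m then lk u (m + Suc k) else 0)" using tn_val[OF ursp] tv_def by simp
  have d0: "\<delta> \<le> 0" and d1: "\<delta> \<le> tv - lk u k" and d2: "\<delta> = 0 \<or> \<delta> = tv - lk u k"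
    by (auto simp: \<delta>_def g_def tv_def)
  have lkp: "\<And>i. lk (phi k u) i = lk u i + (if m \<le> i \<and> i \<le> m + k then \<delta> else 0)"
    using k by (simp add: phi_def \<delta>_def W_def)
  have tvp: "lk (phi k u) (tn k) = tv" using k by (simp add: phi_def W_tn tv_def)
  have tv0: "0 \<le> tv" using tv B k by auto
  have Tk: "\<And>i. i \<le> k \<Longrightarrow> lk u k \<le> lk u (m+i)"
  proof -
    fix i assume "i \<le> k"
    then have "lk u (m+k) \<le> lk u (m+i)" using C[of i k] k by simp
    moreover have "lk u k \<le> lk u (m+k)" using XT[of k] k by simp
    ultimately show "lk u k \<le> lk u (m+i)" by simp
  qed
  have Tkk: "\<And>i. i \<le> k \<Longrightarrow> tv \<le> lk u (m+i)"
  proof -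
    fix i assume "i \<le> k"
    show "tv \<le> lk u (m+i)"
    proof (cases "Suc k < m")
      case True then show ?thesis using tv C[of i "Suc k"] \<open>i \<le> k\<close> by auto
    next
      case False then show ?thesis using tv B[of "m+i"] \<open>i \<le> k\<close> k by auto
    qed
  qed
  show ?thesis unfolding H_def
  proof (intro CollectI conjI allI impI)
    show "phi k u \<in> rsp (3*m)" using ursp by (simp add: phi_def rsp_def W_def)
  next
    fix i assume i: "i < 3*m"
    show "0 \<le> lk (phi k u) i"
    proof (cases "m \<le> i \<and> i \<le> m + k")
      case True
      then obtain l where l: "i = m + l" "l \<le> k" by (metis add_le_cancel_left le_add_diff_inverse)
      have "0 \<le> lk u (m+l) + \<delta>" using d2 B[of "m+l"] Tk[of l] tv0 l k by auto
      then show ?thesis using True lkp l by simp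
    next
      case False then show ?thesis using lkp[of i] B[OF i] by auto
    qed
    show "lk (phi k u) i \<le> 1" using lkp B[OF i] d0 by simp
  next
    fix i i' assume ii: "i \<le> i'" "i' < m"
    show "lk (phi k u) i' \<le> lk (phi k u) i" using lkp C[OF ii] ii by auto
    show "lk (phi k u) (2*m+i') \<le> lk (phi k u) (2*m+i)" using lkp C[OF ii] k ii by auto
    show "lk (phi k u) (m+i') \<le> lk (phi k u) (m+i)"
    proof (cases "i' \<le> k")
      case True then show ?thesis using lkp C[OF ii] ii by simp
    next
      case False
      note i'k = False
      show ?thesis
      proof (cases "i \<le> k")
        case False then show ?thesis using lkp C[OF ii] ii i'k by simp
      next
        case True
        have sk: "Suc k < m" using i'k ii by simp
        have a: "lk u (m+i') \<le> tv" using tv sk C[of "Suc k" i'] i'k ii by simp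
        have b: "tv \<le> lk u (m+i) + \<delta>" using d2 C[of i k] XT[of k] True k Tkk[OF True] Tk[OF True] by auto
        show ?thesis using lkp a b True i'k by simp
      qed
    qed
  next
    fix i assume "i < m"
    then show "lk (phi k u) (m+i) \<le> lk (phi k u) (2*m+i)" using lkp TZ[of i] d0 k by auto
  next
    fix k' assume "k' < m" "Suc k \<le> k'"
    then show "lk (phi k u) k' \<le> lk (phi k u) (m+k')" using lkp XT by simp
  next
    fix k' i assume k': "k' < m" "k' < Suc k" and ik: "i \<le> k'"
    show "lk (phi k u) k' + lk (phi k u) (m+i) \<le> lk (phi k u) (2*m+i) + lk (phi k u) (tn k')"
    proof (cases "k' < k")
      case True
      have tnk': "tn k' = m + Suc k'" using True k by (simp add: tn_def)
      have "lk u k' + lk u (m+i) \<le> lk u (2*m+i) + lk u (tn k')" using F[OF k'(1) True ik] .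
      then show ?thesis using lkp tnk' True ik k' k by auto
    next
      case False
      then have kk: "k' = k" using k' by simp
      show ?thesis using lkp tvp kk ik d1 TZ[of i] k by auto
    qed
  qed
qed

lemma step2:
  assumes k: "k < m" and u: "u \<in> H (Suc k)"
  shows "psi k u \<in> H k"
proof -
  define \<delta> where "\<delta> = min 0 (g k u)"
  have ursp: "u \<in> rsp (3*m)" using u by (simp add: H_def)
  have B: "\<And>i. i<3*m \<Longrightarrow> 0 \<le> lk u i \<and> lk u i \<le> 1" using u by (simp add: H_def)
  have C: "\<And>i i'. i \<le> i' \<Longrightarrow> i' < m \<Longrightarrow> lk u i' \<le> lk u i \<and> lk u (m+i') \<le> lk u (m+i) \<and> lk u (2*m+i') \<le> lk u (2*m+i)"
    using u by (simp add: H_def)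
  have TZ: "\<And>i. i<m \<Longrightarrow> lk u (m+i) \<le> lk u (2*m+i)" using u by (simp add: H_def)
  have XT: "\<And>k'. k'<m \<Longrightarrow> Suc k \<le> k' \<Longrightarrow> lk u k' \<le> lk u (m+k')" using u by (simp add: H_def)
  have F: "\<And>k' i. k'<m \<Longrightarrow> k' < Suc k \<Longrightarrow> i \<le> k' \<Longrightarrow> lk u k' + lk u (m+i) \<le> lk u (2*m+i) + lk u (tn k')"
    using u by (simp add: H_def)
  define tv where "tv = lk u (tn k)"
  have tv: "tv = (if Suc k < m then lk u (m + Suc k) else 0)" using tn_val[OF ursp] tv_def by simp
  have d0: "\<delta> \<le> 0" and d1: "\<delta> \<le> tv - lk u k" and d2: "\<delta> = 0 \<and> lk u k \<le> tv \<or> \<delta> = tv - lk u k"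
    by (auto simp: \<delta>_def g_def tv_def)
  have lkp: "\<And>i. lk (psi k u) i = lk u i - (if m \<le> i \<and> i \<le> m + k then \<delta> else 0)"
    using k by (simp add: psi_def \<delta>_def W_def)
  have tvp: "lk (psi k u) (tn k) = tv" using k by (simp add: psi_def W_tn tv_def)
  have tvT: "tv \<le> lk u (m+k)"
    using tv C[of k "Suc k"] B[of "m+k"] k by auto
  have Fk: "\<And>i. i \<le> k \<Longrightarrow> lk u k + lk u (m+i) \<le> lk u (2*m+i) + tv"
    using F[of k] k tv_def by simp
  have Zb: "\<And>i. i \<le> k \<Longrightarrow> lk u (m+i) - \<delta> \<le> lk u (2*m+i)"
  proof -
    fix i assume i: "i \<le> k"
    show "lk u (m+i) - \<delta> \<le> lk u (2*m+i)"
      using d2 TZ[of i] Fk[OF i] i k by auto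
  qed
  show ?thesis unfolding H_def
  proof (intro CollectI conjI allI impI)
    show "psi k u \<in> rsp (3*m)" using ursp by (simp add: psi_def rsp_def W_def)
  next
    fix i assume i: "i < 3*m"
    show "0 \<le> lk (psi k u) i" using lkp[of i] B[OF i] d0 by auto
    show "lk (psi k u) i \<le> 1"
    proof (cases "m \<le> i \<and> i \<le> m + k")
      case True
      then obtain l where l: "i = m + l" "l \<le> k" by (metis add_le_cancel_left le_add_diff_inverse)
      have "lk u (m+l) - \<delta> \<le> 1" using Zb[OF l(2)] B[of "2*m+l"] l k by auto
      then show ?thesis using True lkp l by simp
    next
      case False then show ?thesis using lkp[of i] B[OF i] by auto
    qed
  next
    fix i i' assume ii: "i \<le> i'" "i' < m"
    show "lk (psi k u) i' \<le> lk (psi k u) i" using lkp C[OF ii] ii by auto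
    show "lk (psi k u) (2*m+i') \<le> lk (psi k u) (2*m+i)" using lkp C[OF ii] k ii by auto
    show "lk (psi k u) (m+i') \<le> lk (psi k u) (m+i)" using lkp C[OF ii] ii d0 by auto
  next
    fix i assume "i < m"
    show "lk (psi k u) (m+i) \<le> lk (psi k u) (2*m+i)"
    proof (cases "i \<le> k")
      case True then show ?thesis using lkp Zb[OF True] k by auto
    next
      case False then show ?thesis using lkp TZ[of i] \<open>i < m\<close> k by auto
    qed
  next
    fix k' assume k': "k' < m" "k \<le> k'"
    show "lk (psi k u) k' \<le> lk (psi k u) (m+k')"
    proof (cases "k' = k")
      case True
      have "lk u k \<le> lk u (m+k) - \<delta>" using d2 tvT by auto
      then show ?thesis using lkp True k by auto
    next
      case False then show ?thesis using lkp XT[of k'] k' by auto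
    qed
  next
    fix k' i assume k': "k' < m" "k' < k" and ik: "i \<le> k'"
    have tnk': "tn k' = m + Suc k'" using k' k by (simp add: tn_def)
    have "lk u k' + lk u (m+i) \<le> lk u (2*m+i) + lk u (tn k')" using F[of k' i] k' ik by simp
    then show "lk (psi k u) k' + lk (psi k u) (m+i) \<le> lk (psi k u) (2*m+i) + lk (psi k u) (tn k')"
      using lkp tnk' k' ik k by auto
  qed
qed

fun Phi :: "nat \<Rightarrow> pt \<Rightarrow> pt" where
  "Phi 0 u = u"
| "Phi (Suc j) u = phi j (Phi j u)"

lemma H_Suc: "k < m \<Longrightarrow> H (Suc k) = phi k ` H k"
proof
  assume k: "k < m"
  show "phi k ` H k \<subseteq> H (Suc k)" using step1[OF k] by auto
  show "H (Suc k) \<subseteq> phi k ` H k"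
  proof
    fix v assume "v \<in> H (Suc k)"
    then have "psi k v \<in> H k" "v = phi k (psi k v)" using step2[OF k] phi_psi[OF k] by auto
    then show "v \<in> phi k ` H k" by blast
  qed
qed

lemma H_Phi: "j \<le> m \<Longrightarrow> H j = Phi j ` H 0"
proof (induction j)
  case 0 then show ?case by simp
next
  case (Suc j)
  then have "H (Suc j) = phi j ` H j" using H_Suc by simp
  also have "\<dots> = phi j ` Phi j ` H 0" using Suc by simp
  finally show ?case by (simp add: image_image)
qed

lemma Phi_unchanged: "j \<le> m \<Longrightarrow> \<not> (m \<le> i \<and> i < m + j) \<Longrightarrow> lk (Phi j u) i = lk u i"
proof (induction j)
  case 0 then show ?case by simp
next
  case (Suc j)
  then show ?case by (auto simp add: phi_def W_def)
qed

lemma g_Phi: "k < j \<Longrightarrow> j \<le> m \<Longrightarrow> g k (Phi k u) = g k u"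
  unfolding g_def by (subst Phi_unchanged, simp, simp add: tn_def)+ simp

lemma Phi_closed: "j \<le> m \<Longrightarrow> Phi j u = u + (\<Sum>k<j. min 0 (g k u) *\<^sub>R W k)"
proof (induction j)
  case 0 then show ?case by simp
next
  case (Suc j)
  have e: "g j (Phi j u) = g j u" using g_Phi[of j "Suc j"] Suc.prems by simp
  have "Phi (Suc j) u = Phi j u + min 0 (g j u) *\<^sub>R W j" by (simp only: Phi.simps phi_def e)
  then show ?case using Suc.IH Suc.prems by simp
qed

end


definition comono :: "pt \<Rightarrow> pt \<Rightarrow> bool" where
  "comono u p \<longleftrightarrow> (\<forall>a b. lk u a \<le> lk u b \<longrightarrow> lk p a \<le> lk p b)"
definition zo :: "pt \<Rightarrow> bool" where "zo p \<longleftrightarrow> (\<forall>i. lk p i = 0 \<or> lk p i = 1)"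
definition ordset :: "nat \<Rightarrow> (nat \<times> nat) set \<Rightarrow> pt set" where
  "ordset N R = {u \<in> rsp N. (\<forall>i<N. 0 \<le> lk u i \<and> lk u i \<le> 1) \<and> (\<forall>(a,b)\<in>R. lk u a \<le> lk u b)}"

lemma peel:
  assumes "u \<in> ordset N R"
  shows "u \<in> convex hull {p \<in> ordset N R. zo p \<and> comono u p}"
  using assms
proof (induction "card {i. lk u i \<noteq> 0}" arbitrary: u rule: less_induct)
  case less
  let ?S = "\<lambda>u. {p \<in> ordset N R. zo p \<and> comono u p}"
  have ursp: "u \<in> rsp N" and ub: "\<And>i. i<N \<Longrightarrow> 0 \<le> lk u i \<and> lk u i \<le> 1"
    and uR: "\<And>a b. (a,b)\<in>R \<Longrightarrow> lk u a \<le> lk u b"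
    using less.prems by (auto simp: ordset_def)
  have nz: "\<And>i. lk u i \<noteq> 0 \<Longrightarrow> i < N \<and> 0 < lk u i"
  proof -
    fix i assume "lk u i \<noteq> 0"
    moreover have "i < N" using \<open>lk u i \<noteq> 0\<close> rsp_lk[OF ursp, of i] by (meson not_le)
    ultimately show "i < N \<and> 0 < lk u i" using ub[of i] by auto
  qed
  have ule1: "\<And>i. lk u i \<le> 1" using ub rsp_lk[OF ursp] by (metis not_le zero_le_one)
  define Sp where "Sp = {i. lk u i \<noteq> 0}"
  have finSp: "finite Sp" by (simp add: Sp_def)
  show ?case
  proof (cases "Sp = {}")
    case True
    then have "u = 0" by (intro poly_mapping_eqI) (auto simp: Sp_def)
    then have "u \<in> ?S u" using less.prems by (simp add: zo_def comono_def)
    then show ?thesis by (rule hull_inc)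
  next
    case False
    define s where "s = Min (lk u ` Sp)"
    have "s \<in> lk u ` Sp" unfolding s_def using False finSp by (intro Min_in) auto
    then obtain i0 where i0: "i0 \<in> Sp" "lk u i0 = s" by auto
    have sle: "\<And>i. i \<in> Sp \<Longrightarrow> s \<le> lk u i" unfolding s_def using finSp by simp
    have s0: "0 < s" using nz i0 by (auto simp: Sp_def)
    have s1: "s \<le> 1" using ule1 i0 by auto
    define p where "p = mk (\<lambda>i. if lk u i \<noteq> 0 then 1 else 0) N"
    have lkp: "\<And>i. lk p i = (if lk u i \<noteq> 0 then 1 else 0)" using nz by (auto simp: p_def)
    have pmono: "\<And>a b. lk u a \<le> lk u b \<Longrightarrow> lk p a \<le> lk p b"
    proof -
      fix a b assume "lk u a \<le> lk u b"
      then show "lk p a \<le> lk p b" using nz[of a] nz[of b] lkp[of a] lkp[of b] by force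
    qed
    have pS: "p \<in> ?S u"
    proof -
      have "\<forall>(a,b)\<in>R. lk p a \<le> lk p b" using pmono uR by auto
      moreover have "p \<in> rsp N" by (simp add: p_def)
      moreover have "\<forall>i<N. 0 \<le> lk p i \<and> lk p i \<le> 1" using lkp by simp
      ultimately have "p \<in> ordset N R" by (simp add: ordset_def)
      moreover have "zo p" using lkp by (simp add: zo_def)
      moreover have "comono u p" using pmono by (simp add: comono_def)
      ultimately show ?thesis by simp
    qed
    show ?thesis
    proof (cases "s = 1")
      case True
      have "u = p"
      proof (rule poly_mapping_eqI)
        fix i show "lk u i = lk p i"
          using lkp[of i] sle[of i] ule1[of i] True by (auto simp: Sp_def)
      qed
      then show ?thesis using pS hull_inc by metis
    next
      case False
      then have s1': "s < 1" using s1 by simp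
      define u' where "u' = (1/(1-s)) *\<^sub>R (u - s *\<^sub>R p)"
      have lku': "\<And>i. lk u' i = (if lk u i \<noteq> 0 then (lk u i - s)/(1-s) else 0)"
        by (simp add: u'_def lkp divide_simps)
      have mono: "\<And>a b. lk u a \<le> lk u b \<Longrightarrow> lk u' a \<le> lk u' b"
      proof -
        fix a b assume ab: "lk u a \<le> lk u b"
        show "lk u' a \<le> lk u' b"
        proof (cases "lk u a = 0")
          case True
          have "0 \<le> lk u' b"
          proof (cases "lk u b = 0")
            case False
            then have "s \<le> lk u b" using sle by (simp add: Sp_def)
            then show ?thesis using lku'[of b] s1' by simp
          qed (simp add: lku')
          then show ?thesis using True lku' by simp
        next
          case False
          then have "lk u b \<noteq> 0" using nz[of a] ab by auto
          then show ?thesis using False lku'[of a] lku'[of b] ab s1'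
            by (simp add: divide_right_mono)
        qed
      qed
      have u'ord: "u' \<in> ordset N R"
        unfolding ordset_def
      proof (intro CollectI conjI allI impI ballI)
        show "u' \<in> rsp N" using ursp by (simp add: rsp_def lku')
      next
        fix i assume "i < N"
        show "0 \<le> lk u' i"
        proof (cases "lk u i = 0")
          case False
          then have "s \<le> lk u i" using sle by (simp add: Sp_def)
          then show ?thesis using lku'[of i] s1' by simp
        qed (simp add: lku')
        show "lk u' i \<le> 1"
        proof (cases "lk u i = 0")
          case False
          have "lk u i - s \<le> 1 - s" using ule1[of i] by simp
          then show ?thesis using lku'[of i] s1' False by (simp add: divide_le_eq)
        qed (simp add: lku')
      next
        fix x assume "x \<in> R"
        then show "case x of (a, b) \<Rightarrow> lk u' a \<le> lk u' b" using uR mono by (cases x) auto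
      qed
      have "{i. lk u' i \<noteq> 0} \<subseteq> Sp - {i0}"
        using lku' i0 by (auto simp: Sp_def)
      then have "{i. lk u' i \<noteq> 0} \<subset> Sp" using i0 by blast
      then have card: "card {i. lk u' i \<noteq> 0} < card {i. lk u i \<noteq> 0}"
        using psubset_card_mono[OF finSp] unfolding Sp_def by blast
      have "u' \<in> convex hull ?S u'" by (rule less.hyps[OF card u'ord])
      moreover have "?S u' \<subseteq> ?S u"
        using mono by (auto simp: comono_def)
      ultimately have u'h: "u' \<in> convex hull ?S u" using hull_mono by blast
      have ueq: "u = s *\<^sub>R p + (1 - s) *\<^sub>R u'"
      proof (rule poly_mapping_eqI)
        fix i show "lk u i = lk (s *\<^sub>R p + (1 - s) *\<^sub>R u') i"
          using s1' by (simp add: lkp lku')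
      qed
      have F: "s *\<^sub>R p + (1 - s) *\<^sub>R u' \<in> convex hull ?S u"
        by (rule convexD[OF convex_convex_hull hull_inc[OF pS] u'h]) (use s0 s1 in auto)
      show ?thesis using F by (simp only: ueq[symmetric])
    qed
  qed
qed


lemma cvx1: "0 \<le> a \<Longrightarrow> 0 \<le> b \<Longrightarrow> (x::real) \<le> x' \<Longrightarrow> y \<le> y' \<Longrightarrow> a*x + b*y \<le> a*x' + b*y'"
  by (simp add: add_mono mult_left_mono)

context fixes m :: nat begin

definition R0 :: "(nat \<times> nat) set" where
  "R0 = {(i', i) | i i'. i \<le> i' \<and> i' < m} \<union> {(m+i', m+i) | i i'. i \<le> i' \<and> i' < m}
     \<union> {(2*m+i', 2*m+i) | i i'. i \<le> i' \<and> i' < m} \<union> {(i, m+i) | i. i < m} \<union> {(m+i, 2*m+i) | i. i < m}"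

lemma H0_ord: "H m 0 = ordset (3*m) R0"
  unfolding H_def ordset_def R0_def by auto

lemma convex_H: "convex (H m j)"
  unfolding convex_def
proof (intro ballI allI impI)
  fix x y and a b :: real
  assume x: "x \<in> H m j" and y: "y \<in> H m j" and ab: "0 \<le> a" "0 \<le> b" "a + b = 1"
  have L: "\<And>i. lk (a *\<^sub>R x + b *\<^sub>R y) i = a * lk x i + b * lk y i" by simp
  note xd = x[unfolded H_def, simplified] and yd = y[unfolded H_def, simplified]
  show "a *\<^sub>R x + b *\<^sub>R y \<in> H m j"
    unfolding H_def
  proof (intro CollectI conjI allI impI)
    show "a *\<^sub>R x + b *\<^sub>R y \<in> rsp (3*m)" using xd yd by (simp add: rsp_def)
  next
    fix i assume i: "i < 3*m"
    have "0 \<le> lk x i" "lk x i \<le> 1" "0 \<le> lk y i" "lk y i \<le> 1" using xd yd i by auto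
    then show "0 \<le> lk (a *\<^sub>R x + b *\<^sub>R y) i" "lk (a *\<^sub>R x + b *\<^sub>R y) i \<le> 1"
      using cvx1[OF ab(1,2), of 0 "lk x i" 0 "lk y i"] cvx1[OF ab(1,2), of "lk x i" 1 "lk y i" 1] ab(3)
      by (simp_all add: L)
  next
    fix i i' assume ii: "i \<le> i'" "i' < m"
    have "lk x i' \<le> lk x i" "lk x (m+i') \<le> lk x (m+i)" "lk x (2*m+i') \<le> lk x (2*m+i)"
         "lk y i' \<le> lk y i" "lk y (m+i') \<le> lk y (m+i)" "lk y (2*m+i') \<le> lk y (2*m+i)"
      using xd yd ii by auto
    then show "lk (a *\<^sub>R x + b *\<^sub>R y) i' \<le> lk (a *\<^sub>R x + b *\<^sub>R y) i"
       "lk (a *\<^sub>R x + b *\<^sub>R y) (m+i') \<le> lk (a *\<^sub>R x + b *\<^sub>R y) (m+i)"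
       "lk (a *\<^sub>R x + b *\<^sub>R y) (2*m+i') \<le> lk (a *\<^sub>R x + b *\<^sub>R y) (2*m+i)"
      by (simp_all only: L cvx1[OF ab(1,2)])
  next
    fix i assume i: "i < m"
    have "lk x (m+i) \<le> lk x (2*m+i)" "lk y (m+i) \<le> lk y (2*m+i)" using xd yd i by auto
    then show "lk (a *\<^sub>R x + b *\<^sub>R y) (m+i) \<le> lk (a *\<^sub>R x + b *\<^sub>R y) (2*m+i)"
      by (simp only: L cvx1[OF ab(1,2)])
  next
    fix k assume k: "k < m" "j \<le> k"
    have "lk x k \<le> lk x (m+k)" "lk y k \<le> lk y (m+k)" using xd yd k by auto
    then show "lk (a *\<^sub>R x + b *\<^sub>R y) k \<le> lk (a *\<^sub>R x + b *\<^sub>R y) (m+k)"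
      by (simp only: L cvx1[OF ab(1,2)])
  next
    fix k i assume k: "k < m" "k < j" and ik: "i \<le> k"
    have "lk x k + lk x (m+i) \<le> lk x (2*m+i) + lk x (tn m k)"
         "lk y k + lk y (m+i) \<le> lk y (2*m+i) + lk y (tn m k)" using xd yd k ik by auto
    from cvx1[OF ab(1,2) this]
    show "lk (a *\<^sub>R x + b *\<^sub>R y) k + lk (a *\<^sub>R x + b *\<^sub>R y) (m+i) \<le> lk (a *\<^sub>R x + b *\<^sub>R y) (2*m+i) + lk (a *\<^sub>R x + b *\<^sub>R y) (tn m k)"
      by (simp add: L algebra_simps)
  qed
qed

end



context fixes m :: nat begin

definition Pp :: "nat \<Rightarrow> nat \<Rightarrow> nat \<Rightarrow> pt" where
  "Pp r1 r2 r3 = mk (\<lambda>k. if k < m then ind (k < r1) else if k < 2*m then ind (k - m < r2) else ind (k - 2*m < r3)) (3*m)"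

lemma Pp_X: "i < m \<Longrightarrow> lk (Pp r1 r2 r3) i = ind (i < r1)" by (simp add: Pp_def)
lemma Pp_T: "i < m \<Longrightarrow> lk (Pp r1 r2 r3) (m+i) = ind (i < r2)" by (simp add: Pp_def)
lemma Pp_Z: "i < m \<Longrightarrow> lk (Pp r1 r2 r3) (2*m+i) = ind (i < r3)" by (simp add: Pp_def)
lemma Pp_out: "3*m \<le> i \<Longrightarrow> lk (Pp r1 r2 r3) i = 0" by (simp add: Pp_def)
lemma Pp_tn: "lk (Pp r1 r2 r3) (tn m k) = (if Suc k < m then ind (Suc k < r2) else 0)"
  by (simp add: Pp_def tn_def)

lemma Pp_zo: "zo (Pp r1 r2 r3)" by (simp add: zo_def Pp_def ind_def)

lemma ind_le: "ind a \<le> ind b \<longleftrightarrow> (a \<longrightarrow> b)" by (simp add: ind_def)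
lemma ind_bnd: "0 \<le> ind a" "ind a \<le> 1" by (simp_all add: ind_def)

lemma Pp_H:
  assumes r: "r1 \<le> r2" "r2 \<le> r3" "r3 \<le> m" and c: "\<forall>k<j. k < r1 \<longrightarrow> Suc k < r2"
  shows "Pp r1 r2 r3 \<in> H m j"
  unfolding H_def
proof (intro CollectI conjI allI impI)
  show "Pp r1 r2 r3 \<in> rsp (3*m)" by (simp add: Pp_def)
next
  fix i assume "i < 3*m" then show "0 \<le> lk (Pp r1 r2 r3) i" "lk (Pp r1 r2 r3) i \<le> 1"
    by (simp_all add: Pp_def ind_def)
next
  fix i i' assume ii: "i \<le> i'" "i' < m"
  then show "lk (Pp r1 r2 r3) i' \<le> lk (Pp r1 r2 r3) i" "lk (Pp r1 r2 r3) (m+i') \<le> lk (Pp r1 r2 r3) (m+i)"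
    "lk (Pp r1 r2 r3) (2*m+i') \<le> lk (Pp r1 r2 r3) (2*m+i)"
    by (simp_all add: Pp_X Pp_T Pp_Z ind_le)
next
  fix i assume "i < m" then show "lk (Pp r1 r2 r3) (m+i) \<le> lk (Pp r1 r2 r3) (2*m+i)"
    using r by (simp add: Pp_T Pp_Z ind_le)
next
  fix k assume "k < m" "j \<le> k" then show "lk (Pp r1 r2 r3) k \<le> lk (Pp r1 r2 r3) (m+k)"
    using r by (simp add: Pp_X Pp_T ind_le)
next
  fix k i assume k: "k < m" "k < j" and ik: "i \<le> k"
  show "lk (Pp r1 r2 r3) k + lk (Pp r1 r2 r3) (m+i) \<le> lk (Pp r1 r2 r3) (2*m+i) + lk (Pp r1 r2 r3) (tn m k)"
  proof (cases "k < r1")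
    case True
    then have "Suc k < r2" using c k by auto
    then have "Suc k < m" using r by simp
    then show ?thesis using True \<open>Suc k < r2\<close> k ik r by (simp add: Pp_X Pp_T Pp_Z Pp_tn ind_def)
  next
    case False
    then show ?thesis using k ik r by (simp add: Pp_X Pp_T Pp_Z Pp_tn ind_def)
  qed
qed

lemma downset:
  assumes "\<And>i i'. i < m \<Longrightarrow> i' \<le> i \<Longrightarrow> f i \<Longrightarrow> f i'"
  shows "\<exists>r\<le>m. \<forall>i<m. f i = (i < r)"
proof -
  define r where "r = (LEAST i. \<not> (i < m \<and> f i))"
  have ex: "\<not> (m < m \<and> f m)" by simp
  have rle: "r \<le> m" unfolding r_def by (rule Least_le) simp
  have nr: "\<not> (r < m \<and> f r)" unfolding r_def by (rule LeastI[of _ m]) simp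
  have "\<forall>i<m. f i = (i < r)"
  proof (intro allI impI)
    fix i assume i: "i < m"
    show "f i = (i < r)"
    proof
      assume fi: "f i"
      show "i < r"
      proof (rule ccontr)
        assume "\<not> i < r"
        then have "r \<le> i" by simp
        then have "f r" using assms[OF i _ fi] by simp
        moreover have "r < m" using \<open>r \<le> i\<close> i by simp
        ultimately show False using nr by simp
      qed
    next
      assume "i < r"
      then have "i < m \<and> f i" unfolding r_def by (rule not_less_Least[THEN not_not[THEN iffD1]])
      then show "f i" by simp
    qed
  qed
  then show ?thesis using rle by blast
qed

lemma char:
  assumes p: "p \<in> H m 0" "zo p"
  shows "\<exists>r1 r2 r3. r1 \<le> r2 \<and> r2 \<le> r3 \<and> r3 \<le> m \<and> p = Pp r1 r2 r3"
proof -
  have prsp: "p \<in> rsp (3*m)" using p by (simp add: H_def)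
  have C: "\<And>i i'. i \<le> i' \<Longrightarrow> i' < m \<Longrightarrow> lk p i' \<le> lk p i \<and> lk p (m+i') \<le> lk p (m+i) \<and> lk p (2*m+i') \<le> lk p (2*m+i)"
    using p by (simp add: H_def)
  have B: "\<And>i. i<3*m \<Longrightarrow> 0 \<le> lk p i \<and> lk p i \<le> 1" using p by (simp add: H_def)
  have TZ: "\<And>i. i<m \<Longrightarrow> lk p (m+i) \<le> lk p (2*m+i)" using p by (simp add: H_def)
  have XT: "\<And>k. k<m \<Longrightarrow> lk p k \<le> lk p (m+k)" using p by (simp add: H_def)
  have z: "\<And>i. lk p i = 0 \<or> lk p i = 1" using p by (simp add: zo_def)
  have "\<exists>r\<le>m. \<forall>i<m. (lk p i = 1) = (i < r)"
  proof (rule downset)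
    fix i i' assume "i < m" "i' \<le> i" "lk p i = 1"
    then show "lk p i' = 1" using C[of i' i] z[of "i'"] by auto
  qed
  then obtain r1 where r1: "r1 \<le> m" "\<And>i. i<m \<Longrightarrow> (lk p i = 1) = (i < r1)" by blast
  have "\<exists>r\<le>m. \<forall>i<m. (lk p (m+i) = 1) = (i < r)"
  proof (rule downset)
    fix i i' assume "i < m" "i' \<le> i" "lk p (m+i) = 1"
    then show "lk p (m+i') = 1" using C[of i' i] z[of "m+i'"] by auto
  qed
  then obtain r2 where r2: "r2 \<le> m" "\<And>i. i<m \<Longrightarrow> (lk p (m+i) = 1) = (i < r2)" by blast
  have "\<exists>r\<le>m. \<forall>i<m. (lk p (2*m+i) = 1) = (i < r)"
  proof (rule downset)
    fix i i' assume "i < m" "i' \<le> i" "lk p (2*m+i) = 1"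
    then show "lk p (2*m+i') = 1" using C[of i' i] z[of "2*m+i'"] by auto
  qed
  then obtain r3 where r3: "r3 \<le> m" "\<And>i. i<m \<Longrightarrow> (lk p (2*m+i) = 1) = (i < r3)" by blast
  have X1: "\<And>i. i<m \<Longrightarrow> lk p i = ind (i < r1)" using r1 z by (metis ind_def zero_neq_one)
  have T1: "\<And>i. i<m \<Longrightarrow> lk p (m+i) = ind (i < r2)" using r2 z by (metis ind_def zero_neq_one)
  have Z1: "\<And>i. i<m \<Longrightarrow> lk p (2*m+i) = ind (i < r3)" using r3 z by (metis ind_def zero_neq_one)
  have "r1 \<le> r2"
  proof (rule ccontr)
    assume "\<not> r1 \<le> r2"
    then have "r2 < m" "r2 < r1" using r1 by auto
    then show False using X1[of r2] T1[of r2] XT[of r2] by (simp add: ind_def)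
  qed
  moreover have "r2 \<le> r3"
  proof (rule ccontr)
    assume "\<not> r2 \<le> r3"
    then have "r3 < m" "r3 < r2" using r2 by auto
    then show False using T1[of r3] Z1[of r3] TZ[of r3] by (simp add: ind_def)
  qed
  moreover have "p = Pp r1 r2 r3"
  proof (rule poly_mapping_eqI)
    fix i
    show "lk p i = lk (Pp r1 r2 r3) i"
    proof (cases "i < m")
      case True then show ?thesis using X1 Pp_X by simp
    next
      case F1: False
      show ?thesis
      proof (cases "i < 2*m")
        case True
        have "i - m < m" using True F1 by simp
        then show ?thesis using T1[of "i - m"] Pp_T[of "i - m" r1 r2 r3] F1 by simp
      next
        case F2: False
        show ?thesis
        proof (cases "i < 3*m")
          case True
          have "i - 2*m < m" using True F2 by simp
          then show ?thesis using Z1[of "i - 2*m"] Pp_Z[of "i - 2*m" r1 r2 r3] F2 by simp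
        next
          case False then show ?thesis using rsp_lk[OF prsp] Pp_out by simp
        qed
      qed
    qed
  qed
  ultimately show ?thesis using r3 by blast
qed

end


context fixes m :: nat begin

definition V0 :: "pt set" where "V0 = {p \<in> H m 0. zo p}"

lemma V0_eq: "V0 = {Pp m r1 r2 r3 | r1 r2 r3. r1 \<le> r2 \<and> r2 \<le> r3 \<and> r3 \<le> m}"
proof
  show "V0 \<subseteq> {Pp m r1 r2 r3 | r1 r2 r3. r1 \<le> r2 \<and> r2 \<le> r3 \<and> r3 \<le> m}"
    using char unfolding V0_def by blast
  show "{Pp m r1 r2 r3 | r1 r2 r3. r1 \<le> r2 \<and> r2 \<le> r3 \<and> r3 \<le> m} \<subseteq> V0"
    using Pp_H[of _ _ _ m 0] Pp_zo unfolding V0_def by auto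
qed

lemma finite_V0: "finite V0"
proof -
  have "V0 \<subseteq> (\<lambda>(a,b,c). Pp m a b c) ` ({..m} \<times> {..m} \<times> {..m})"
  proof
    fix x assume "x \<in> V0"
    then obtain r1 r2 r3 where r: "r1 \<le> r2" "r2 \<le> r3" "r3 \<le> m" "x = Pp m r1 r2 r3" unfolding V0_eq by blast
    then show "x \<in> (\<lambda>(a,b,c). Pp m a b c) ` ({..m} \<times> {..m} \<times> {..m})"
      by (intro rev_image_eqI[of "(r1,r2,r3)"]) auto
  qed
  then show ?thesis by (rule finite_subset) simp
qed

lemma Pp0_V0: "Pp m 0 0 0 \<in> V0" unfolding V0_eq by auto

lemma g_add: "g m k (x + y) = g m k x + g m k y" by (simp add: g_def)
lemma g_scale: "g m k (c *\<^sub>R x) = c * g m k x" by (simp add: g_def algebra_simps)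

lemma convex_g_ge: "convex {x. 0 \<le> g m k x}"
  unfolding convex_def by (simp add: g_add g_scale)

lemma convex_g_le: "convex {x. g m k x \<le> 0}"
  unfolding convex_def by (auto simp add: g_add g_scale intro!: add_nonpos_nonpos mult_nonneg_nonpos)

lemma H_conv: assumes j: "j \<le> m" shows "H m j = convex hull (Phi m j ` V0)"
proof
  have "Phi m j ` V0 \<subseteq> H m j" using H_Phi[OF j] by (auto simp: V0_def)
  then show "convex hull (Phi m j ` V0) \<subseteq> H m j" using convex_H by (rule hull_minimal)
next
  show "H m j \<subseteq> convex hull (Phi m j ` V0)"
  proof
    fix u assume "u \<in> H m j"
    then obtain u0 where u0: "u0 \<in> H m 0" "u = Phi m j u0" using H_Phi[OF j] by auto
    define S where "S = {p \<in> ordset (3*m) (R0 m). zo p \<and> comono u0 p}"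
    have u0S: "u0 \<in> convex hull S" unfolding S_def by (rule peel) (use u0 H0_ord in simp)
    have SV: "S \<subseteq> V0" unfolding S_def V0_def using H0_ord by auto
    define \<epsilon> where "\<epsilon> k = (if 0 \<le> g m k u0 then 0 else (1::real))" for k
    define \<Lambda> where "\<Lambda> x = x + (\<Sum>k<j. (\<epsilon> k * g m k x) *\<^sub>R W m k)" for x
    have lin: "linear \<Lambda>"
    proof (rule linearI)
      fix x y show "\<Lambda> (x + y) = \<Lambda> x + \<Lambda> y"
        by (simp add: \<Lambda>_def g_add distrib_left scaleR_add_left sum.distrib algebra_simps)
    next
      fix c x show "\<Lambda> (c *\<^sub>R x) = c *\<^sub>R \<Lambda> x"
        by (simp add: \<Lambda>_def g_scale scaleR_add_right scaleR_sum_right mult.left_commute)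
    qed
    have mn: "min 0 (g m k x) = \<epsilon> k * g m k x" if x: "x \<in> convex hull S" for k x
    proof (cases "0 \<le> g m k u0")
      case True
      have "S \<subseteq> {x. 0 \<le> g m k x}"
      proof
        fix p assume "p \<in> S"
        then have "comono u0 p" by (simp add: S_def)
        moreover have "lk u0 k \<le> lk u0 (tn m k)" using True by (simp add: g_def)
        ultimately show "p \<in> {x. 0 \<le> g m k x}" by (simp add: comono_def g_def)
      qed
      then have "convex hull S \<subseteq> {x. 0 \<le> g m k x}" using convex_g_ge by (rule hull_minimal)
      then show ?thesis using x True by (auto simp: \<epsilon>_def)
    next
      case False
      have "S \<subseteq> {x. g m k x \<le> 0}"
      proof
        fix p assume "p \<in> S"
        then have "comono u0 p" by (simp add: S_def)
        moreover have "lk u0 (tn m k) \<le> lk u0 k" using False by (simp add: g_def)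
        ultimately show "p \<in> {x. g m k x \<le> 0}" by (simp add: comono_def g_def)
      qed
      then have "convex hull S \<subseteq> {x. g m k x \<le> 0}" using convex_g_le by (rule hull_minimal)
      then show ?thesis using x False by (auto simp: \<epsilon>_def)
    qed
    have PL: "Phi m j x = \<Lambda> x" if "x \<in> convex hull S" for x
      unfolding Phi_closed[OF j] \<Lambda>_def using mn[OF that] by simp
    have "u = \<Lambda> u0" using u0 PL[OF u0S] by simp
    also have "\<dots> \<in> \<Lambda> ` (convex hull S)" using u0S by simp
    also have "\<dots> = convex hull (\<Lambda> ` S)" by (rule convex_hull_linear_image[OF lin])
    also have "\<Lambda> ` S = Phi m j ` S" using PL hull_inc[of _ S] by (auto simp: image_def)
    also have "convex hull (Phi m j ` S) \<subseteq> convex hull (Phi m j ` V0)" using SV by (intro hull_mono image_mono)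
    finally show "u \<in> convex hull (Phi m j ` V0)" .
  qed
qed

lemma intpt_Phi: assumes "intpt u" "j \<le> m" shows "intpt (Phi m j u)"
proof -
  have gi: "g m k u \<in> \<int>" for k using assms(1) by (simp add: intpt_def g_def)
  have mi: "min 0 (g m k u) \<in> \<int>" for k using gi[of k] by (simp add: min_def)
  have wi: "lk (W m k) i \<in> \<int>" for k i by (simp add: W_def)
  show ?thesis unfolding intpt_def Phi_closed[OF assms(2)]
    using assms(1) mi wi by (auto simp: intpt_def intro!: Ints_sum Ints_mult Ints_add)
qed

lemma zo_intpt: "zo p \<Longrightarrow> intpt p"
  unfolding zo_def intpt_def by (metis Ints_0 Ints_1)

lemma lat_poly_H: assumes j: "j \<le> m" shows "lattice_polytope_in (3*m) (H m j)"
  unfolding lattice_polytope_in_def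
proof (intro exI conjI)
  show "finite (Phi m j ` V0)" using finite_V0 by simp
  show "Phi m j ` V0 \<noteq> {}" using Pp0_V0 by auto
  show "Phi m j ` V0 \<subseteq> lat (3*m)"
  proof
    fix x assume "x \<in> Phi m j ` V0"
    then obtain p where p: "p \<in> V0" "x = Phi m j p" by auto
    have "x \<in> H m j" using p H_Phi[OF j] by (auto simp: V0_def)
    then have "x \<in> rsp (3*m)" by (simp add: H_def)
    moreover have "intpt x" using p intpt_Phi[OF zo_intpt j] by (simp add: V0_def)
    ultimately show "x \<in> lat (3*m)" by (simp add: lat_def)
  qed
  show "H m j = convex hull (Phi m j ` V0)" by (rule H_conv[OF j])
qed

end


lemma sum_if_scaleR: "finite A \<Longrightarrow> B \<subseteq> A \<Longrightarrow> (\<Sum>v\<in>A. (if v \<in> B then f v else 0) *\<^sub>R (v::pt)) = (\<Sum>v\<in>B. f v *\<^sub>R v)"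
proof -
  assume A: "finite A" and B: "B \<subseteq> A"
  have "(\<Sum>v\<in>A. (if v \<in> B then f v else 0) *\<^sub>R v) = (\<Sum>v\<in>A. if v \<in> B then f v *\<^sub>R v else 0)"
    by (rule sum.cong) auto
  also have "\<dots> = (\<Sum>v\<in>A \<inter> B. f v *\<^sub>R v)" by (rule sum.inter_restrict[OF A, symmetric])
  also have "A \<inter> B = B" using B by blast
  finally show ?thesis .
qed

lemma sum_if_real: "finite A \<Longrightarrow> B \<subseteq> A \<Longrightarrow> (\<Sum>v\<in>A. (if v \<in> B then f v else (0::real))) = (\<Sum>v\<in>B. f v)"
proof -
  assume A: "finite A" and B: "B \<subseteq> A"
  have "(\<Sum>v\<in>A. (if v \<in> B then f v else (0::real))) = (\<Sum>v\<in>A \<inter> B. f v)" by (rule sum.inter_restrict[OF A, symmetric])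
  also have "A \<inter> B = B" using B by blast
  finally show ?thesis .
qed

lemma alat_pt: "v \<in> P \<Longrightarrow> intpt v \<Longrightarrow> v \<in> alat P"
  unfolding alat_def by (intro CollectI exI[of _ "{v}"] exI[of _ "\<lambda>_. 1"]) auto

lemma alat_comb:
  assumes "x \<in> alat P" "y \<in> alat P" "z \<in> alat P"
  shows "x + y - z \<in> alat P"
proof -
  obtain S1 c1 where 1: "finite S1" "S1 \<subseteq> {v \<in> P. intpt v}" "\<forall>v\<in>S1. c1 v \<in> \<int>" "sum c1 S1 = 1" "x = (\<Sum>v\<in>S1. c1 v *\<^sub>R v)"
    using assms(1) unfolding alat_def by blast
  obtain S2 c2 where 2: "finite S2" "S2 \<subseteq> {v \<in> P. intpt v}" "\<forall>v\<in>S2. c2 v \<in> \<int>" "sum c2 S2 = 1" "y = (\<Sum>v\<in>S2. c2 v *\<^sub>R v)"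
    using assms(2) unfolding alat_def by blast
  obtain S3 c3 where 3: "finite S3" "S3 \<subseteq> {v \<in> P. intpt v}" "\<forall>v\<in>S3. c3 v \<in> \<int>" "sum c3 S3 = 1" "z = (\<Sum>v\<in>S3. c3 v *\<^sub>R v)"
    using assms(3) unfolding alat_def by blast
  define S where "S = S1 \<union> S2 \<union> S3"
  define c where "c v = (if v \<in> S1 then c1 v else 0) + (if v \<in> S2 then c2 v else 0) - (if v \<in> S3 then c3 v else 0)" for v
  have fS: "finite S" using 1 2 3 by (simp add: S_def)
  have sub: "S1 \<subseteq> S" "S2 \<subseteq> S" "S3 \<subseteq> S" by (auto simp: S_def)
  have "sum c S = 1"
    unfolding c_def sum.distrib sum_subtractf
    using sum_if_real[OF fS sub(1), of c1] sum_if_real[OF fS sub(2), of c2] sum_if_real[OF fS sub(3), of c3] 1 2 3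
    by simp
  moreover have "x + y - z = (\<Sum>v\<in>S. c v *\<^sub>R v)"
    unfolding c_def scaleR_left_diff_distrib scaleR_add_left sum.distrib sum_subtractf
    using sum_if_scaleR[OF fS sub(1), of c1] sum_if_scaleR[OF fS sub(2), of c2] sum_if_scaleR[OF fS sub(3), of c3] 1 2 3
    by simp
  moreover have "\<forall>v\<in>S. c v \<in> \<int>" using 1 2 3 by (auto simp: c_def S_def)
  moreover have "S \<subseteq> {v \<in> P. intpt v}" using 1 2 3 by (auto simp: S_def)
  ultimately show ?thesis unfolding alat_def using fS by blast
qed

lemma alat_group:
  assumes z: "0 \<in> alat P"
  shows "x \<in> alat P \<Longrightarrow> y \<in> alat P \<Longrightarrow> x + y \<in> alat P"
    and "x \<in> alat P \<Longrightarrow> - x \<in> alat P"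
    and "x \<in> alat P \<Longrightarrow> y \<in> alat P \<Longrightarrow> x - y \<in> alat P"
  using alat_comb[OF _ _ z, of x y] alat_comb[OF z z, of x] alat_comb[OF _ z, of x y] by simp_all

lemma alat_intmul:
  assumes z: "0 \<in> alat P" and e: "e \<in> alat P" and c: "c \<in> \<int>"
  shows "c *\<^sub>R e \<in> alat P"
proof -
  have nat: "real k *\<^sub>R e \<in> alat P" for k
    by (induction k) (simp_all add: z alat_group(1)[OF z] e scaleR_add_left)
  obtain zz where zz: "c = of_int zz" using c Ints_cases by blast
  show ?thesis
  proof (cases "0 \<le> zz")
    case True
    then have "c = real (nat zz)" using zz by simp
    then show ?thesis using nat by simp
  next
    case False
    then have "c = - real (nat (- zz))" using zz by simp
    then show ?thesis using alat_group(2)[OF z nat[of "nat (-zz)"]] by simp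
  qed
qed

lemma alat_sum:
  assumes z: "0 \<in> alat P" and "\<And>i. i < (N::nat) \<Longrightarrow> f i \<in> alat P"
  shows "(\<Sum>i<N. f i) \<in> alat P"
  using assms(2) by (induction N) (simp_all add: z alat_group(1)[OF z])

lemma lat_expand: "x \<in> rsp N \<Longrightarrow> x = (\<Sum>i<N. lk x i *\<^sub>R Poly_Mapping.single i 1)"
proof (rule poly_mapping_eqI)
  fix k assume x: "x \<in> rsp N"
  have "lk (\<Sum>i<N. lk x i *\<^sub>R Poly_Mapping.single i 1) k = (\<Sum>i<N. lk x i * (if i = k then 1 else 0))"
    unfolding lookup_sum lookup_scaleR lookup_single when_def by (rule sum.cong) auto
  also have "\<dots> = (\<Sum>i<N. if i = k then lk x k else 0)" by (rule sum.cong) auto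
  also have "\<dots> = lk x k" using rsp_lk[OF x, of k] by (simp add: sum.delta)
  finally show "lk x k = lk (\<Sum>i<N. lk x i *\<^sub>R Poly_Mapping.single i 1) k" by simp
qed

lemma alat_sub_lat:
  assumes "P \<subseteq> rsp N"
  shows "alat P \<subseteq> lat N"
proof
  fix x assume "x \<in> alat P"
  then obtain S c where S: "finite S" "S \<subseteq> {v \<in> P. intpt v}" "\<forall>v\<in>S. c v \<in> \<int>" "x = (\<Sum>v\<in>S. c v *\<^sub>R v)"
    unfolding alat_def by blast
  have "x \<in> rsp N" using S assms unfolding rsp_def by (auto intro!: sum.neutral)
  moreover have "intpt x" using S unfolding intpt_def by (auto intro!: Ints_sum Ints_mult)
  ultimately show "x \<in> lat N" by (simp add: lat_def)
qed

lemma lat_sub_alat: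
  assumes z: "0 \<in> alat P" and e: "\<And>i. i < N \<Longrightarrow> Poly_Mapping.single i 1 \<in> alat P"
  shows "lat N \<subseteq> alat P"
proof
  fix x assume "x \<in> lat N"
  then have x: "x \<in> rsp N" "intpt x" by (auto simp: lat_def)
  have "(\<Sum>i<N. lk x i *\<^sub>R Poly_Mapping.single i 1) \<in> alat P"
    using x(2) by (intro alat_sum[OF z] alat_intmul[OF z e]) (auto simp: intpt_def)
  then show "x \<in> alat P" using lat_expand[OF x(1)] by simp
qed

context fixes m :: nat begin

lemma Pp000: "Pp m 0 0 0 = 0" by (rule poly_mapping_eqI) (simp add: Pp_def)

lemma zero_H: "0 \<in> H m j"
  using Pp_H[of 0 0 0 m j] Pp000 by simp

lemma PpmH: "j < m \<Longrightarrow> r \<le> m \<Longrightarrow> Pp m r m m \<in> H m j" by (rule Pp_H) auto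
lemma Pp0H: "r \<le> m \<Longrightarrow> Pp m 0 r m \<in> H m j" by (rule Pp_H) auto
lemma Pp00H: "r \<le> m \<Longrightarrow> Pp m 0 0 r \<in> H m j" by (rule Pp_H) auto

lemma alat_H: assumes j: "j < m" shows "alat (H m j) = lat (3*m)"
proof
  show "alat (H m j) \<subseteq> lat (3*m)" by (rule alat_sub_lat) (auto simp: H_def)
  have z: "0 \<in> alat (H m j)" using zero_H alat_pt[of 0] by (simp add: intpt_def)
  have ip: "intpt (Pp m a b c)" for a b c by (rule zo_intpt[OF Pp_zo])
  have d1: "Pp m (Suc i) m m - Pp m i m m = Poly_Mapping.single i 1" if "i < m" for i
    using that by (intro poly_mapping_eqI) (auto simp: Pp_def ind_def lookup_single when_def)
  have d2: "Pp m 0 (Suc i) m - Pp m 0 i m = Poly_Mapping.single (m+i) 1" if "i < m" for i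
    using that by (intro poly_mapping_eqI) (auto simp: Pp_def ind_def lookup_single when_def)
  have d3: "Pp m 0 0 (Suc i) - Pp m 0 0 i = Poly_Mapping.single (2*m+i) 1" if "i < m" for i
    using that by (intro poly_mapping_eqI) (auto simp: Pp_def ind_def lookup_single when_def)
  show "lat (3*m) \<subseteq> alat (H m j)"
  proof (rule lat_sub_alat[OF z])
    fix i assume i: "i < 3*m"
    show "Poly_Mapping.single i 1 \<in> alat (H m j)"
    proof (cases "i < m")
      case True
      then show ?thesis using d1[OF True] alat_group(3)[OF z alat_pt[OF PpmH[OF j] ip] alat_pt[OF PpmH[OF j] ip], of "Suc i" i]
        by simp
    next
      case F1: False
      show ?thesis
      proof (cases "i < 2*m")
        case True
        have l: "i - m < m" using True F1 by simp
        have "i = m + (i - m)" using F1 by simp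
        then show ?thesis using d2[OF l] alat_group(3)[OF z alat_pt[OF Pp0H ip] alat_pt[OF Pp0H ip], of "Suc (i-m)" "i-m"] l
          by simp
      next
        case False
        have l: "i - 2*m < m" using i False by simp
        have "i = 2*m + (i - 2*m)" using False by simp
        then show ?thesis using d3[OF l] alat_group(3)[OF z alat_pt[OF Pp00H ip] alat_pt[OF Pp00H ip], of "Suc (i-2*m)" "i-2*m"] l
          by simp
      qed
    qed
  qed
qed

end


lemma unimod_refl: "unimod_equiv P P"
  unfolding unimod_equiv_def by (intro exI[of _ id] exI[of _ 0]) (simp add: linear_id bij_betw_def)

lemma pair_scale: "pair d (t *\<^sub>R f) u = t * pair d f u"
  by (simp add: pair_def sum_distrib_left mult.assoc)

lemma hull01: "convex hull {0, f} = {t *\<^sub>R f | t. 0 \<le> t \<and> t \<le> (1::real)}"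
  by (simp add: segment_convex_hull[symmetric] closed_segment_def)

lemma Inf_seg: "Inf {t * a | t. 0 \<le> t \<and> t \<le> (1::real)} = min 0 a"
proof (rule cInf_eq_minimum)
  show "min 0 a \<in> {t * a | t. 0 \<le> t \<and> t \<le> 1}"
  proof (cases "0 \<le> a")
    case True then show ?thesis by (intro CollectI exI[of _ 0]) simp
  next
    case False then show ?thesis by (intro CollectI exI[of _ 1]) simp
  qed
next
  fix x assume "x \<in> {t * a | t. 0 \<le> t \<and> t \<le> 1}"
  then obtain t where t: "0 \<le> t" "t \<le> 1" "x = t * a" by blast
  show "min 0 a \<le> x"
  proof (cases "0 \<le> a")
    case True then show ?thesis using t by simp
  next
    case False
    have "(1 - t) * a \<le> 0" using t False by (simp add: mult_nonneg_nonpos)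
    then show ?thesis using t False by (simp add: algebra_simps)
  qed
qed

context fixes m :: nat begin

definition fk :: "nat \<Rightarrow> pt" where
  "fk k = (if Suc k < m then Poly_Mapping.single (m + Suc k) 1 else 0) - Poly_Mapping.single k 1"

lemma lk_fk: "lk (fk k) i = (if Suc k < m \<and> i = m + Suc k then 1 else 0) - (if i = k then 1 else 0)"
  by (auto simp: fk_def lookup_single when_def)

lemma pair_fk: assumes k: "k < m" and u: "u \<in> rsp (3*m)" shows "pair (3*m) (fk k) u = g m k u"
proof -
  have "pair (3*m) (fk k) u = (\<Sum>i<3*m. (if Suc k < m \<and> i = m + Suc k then lk u i else 0) - (if i = k then lk u i else 0))"
    unfolding pair_def lk_fk by (rule sum.cong) (auto simp: algebra_simps)
  also have "\<dots> = (if Suc k < m then lk u (m + Suc k) else 0) - lk u k"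
    using k by (simp add: sum_subtractf sum.delta' sum.If_cases)
  also have "\<dots> = g m k u" using tn_val[OF u] by (simp add: g_def)
  finally show ?thesis .
qed

lemma fk_lat: "k < m \<Longrightarrow> fk k \<in> lat (3*m)"
  unfolding lat_def rsp_def intpt_def by (auto simp: lk_fk)

lemma W_rsp: "W m k \<in> rsp (3*m)" by (simp add: W_def)

lemma mut_step: assumes k: "k < m" shows "mutation_step (H m k) (H m (Suc k))"
  unfolding mutation_step_def
proof (intro exI conjI)
  show "alat (H m k) = lat (3*m)" by (rule alat_H[OF k])
  show "unimod_equiv (H m k) (H m k)" by (rule unimod_refl)
  show "unimod_equiv (H m (Suc k)) (H m (Suc k))" by (rule unimod_refl)
  define F where "F = convex hull {0, fk k}"
  define w where "w = - W m k"
  have Fe: "F = {t *\<^sub>R fk k | t. 0 \<le> t \<and> t \<le> 1}" unfolding F_def by (rule hull01)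
  have wrsp: "w \<in> rsp (3*m)" using W_rsp by (simp add: w_def rsp_def)
  have trop: "trop_map (3*m) w F u = phi m k u" if u: "u \<in> rsp (3*m)" for u
  proof -
    have "(\<lambda>f. pair (3*m) f u) ` F = {t * g m k u | t. 0 \<le> t \<and> t \<le> 1}"
    proof
      show "(\<lambda>f. pair (3*m) f u) ` F \<subseteq> {t * g m k u | t. 0 \<le> t \<and> t \<le> 1}"
        unfolding Fe using pair_fk[OF k u] by (auto simp: pair_scale)
      show "{t * g m k u | t. 0 \<le> t \<and> t \<le> 1} \<subseteq> (\<lambda>f. pair (3*m) f u) ` F"
      proof
        fix x assume "x \<in> {t * g m k u | t. 0 \<le> t \<and> t \<le> 1}"
        then obtain t where t: "0 \<le> t" "t \<le> 1" "x = t * g m k u" by blast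
        show "x \<in> (\<lambda>f. pair (3*m) f u) ` F"
          by (rule rev_image_eqI[of "t *\<^sub>R fk k"]) (use t pair_fk[OF k u] in \<open>auto simp: Fe pair_scale\<close>)
      qed
    qed
    then have "Inf ((\<lambda>f. pair (3*m) f u) ` F) = min 0 (g m k u)" using Inf_seg by simp
    then show ?thesis by (simp add: trop_map_def phi_def w_def)
  qed
  have img: "trop_map (3*m) w F ` H m k = H m (Suc k)"
  proof -
    have "trop_map (3*m) w F ` H m k = phi m k ` H m k"
      using trop by (intro image_cong) (auto simp: H_def)
    then show ?thesis using H_Suc[OF k] by simp
  qed
  show "comb_mutation (3*m) (H m k) (H m (Suc k))"
    unfolding comb_mutation_def
  proof (intro conjI exI)
    show "lattice_polytope_in (3*m) (H m k)" using lat_poly_H[of k m] k by simp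
    show "0 \<in> H m k" by (rule zero_H)
    show "convex (trop_map (3*m) w F ` H m k)" using img convex_H by simp
    show "H m (Suc k) = trop_map (3*m) w F ` H m k" using img by simp
    show "lattice_polytope_in (3*m) F"
      unfolding lattice_polytope_in_def F_def
      by (intro exI[of _ "{0, fk k}"]) (use fk_lat[OF k] in \<open>auto simp: lat_def rsp_def intpt_def\<close>)
    show "\<forall>f\<in>F. pair (3*m) f w = 0"
    proof
      fix f assume "f \<in> F"
      then obtain t where "f = t *\<^sub>R fk k" using Fe by blast
      moreover have "pair (3*m) (fk k) w = 0"
        using pair_fk[OF k wrsp] W_tn[of k m] W_k[of k m] k by (simp add: g_def w_def)
      ultimately show "pair (3*m) f w = 0" by (simp add: pair_scale)
    qed
    show "primitive (3*m) w"
      unfolding primitive_def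
    proof (intro conjI ballI allI impI)
      show "w \<in> lat (3*m)" using wrsp by (simp add: lat_def w_def intpt_def W_def)
      have wm: "lk w m = -1" using k by (simp add: w_def W_def)
      then show "w \<noteq> 0" by auto
      fix v :: pt and kk :: nat assume v: "v \<in> lat (3*m)" and e: "w = real kk *\<^sub>R v"
      have "lk v m \<in> \<int>" using v by (simp add: lat_def intpt_def)
      then obtain zz where zz: "lk v m = of_int zz" using Ints_cases by blast
      have "real kk * of_int zz = -1" using wm e zz by simp
      then have "of_int (int kk * zz) = (of_int (-1) :: real)" by simp
      then have "int kk * zz = -1" by (simp only: of_int_eq_iff)
      then have "int kk dvd 1" by (metis dvd_minus_iff dvd_triv_left)
      then show "kk = 1" by simp
    qed
  qed
qed

end


lemma aff2:
  assumes fl: "linear f" and A: "\<And>x. A x = f x + b" and uv: "u + v = 1"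
  shows "A (u *\<^sub>R x + v *\<^sub>R y) = u *\<^sub>R A x + v *\<^sub>R A y"
proof -
  have "A (u *\<^sub>R x + v *\<^sub>R y) = u *\<^sub>R f x + v *\<^sub>R f y + (u + v) *\<^sub>R b"
    using uv by (simp add: A linear_add[OF fl] linear_scale[OF fl])
  then show ?thesis by (simp add: A algebra_simps)
qed

lemma aff_comb:
  assumes fl: "linear f" and A: "\<And>x. A x = f x + b" and S: "finite S" and c: "sum c S = 1"
  shows "A (\<Sum>v\<in>S. c v *\<^sub>R h v) = (\<Sum>v\<in>S. c v *\<^sub>R A (h v))"
proof -
  have "A (\<Sum>v\<in>S. c v *\<^sub>R h v) = (\<Sum>v\<in>S. c v *\<^sub>R f (h v)) + (sum c S) *\<^sub>R b"
    using c by (simp add: A linear_sum[OF fl] linear_scale[OF fl])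
  also have "\<dots> = (\<Sum>v\<in>S. c v *\<^sub>R A (h v))"
    by (simp add: A scaleR_add_right sum.distrib scaleR_sum_left)
  finally show ?thesis .
qed

lemma alat_map:
  assumes fl: "linear f" and A: "\<And>x. A x = f x + b"
    and AP: "\<And>x. x \<in> P \<Longrightarrow> A x \<in> Q" and BA: "\<And>x. x \<in> P \<Longrightarrow> B (A x) = x"
    and Ai: "\<And>x. intpt x \<Longrightarrow> intpt (A x)"
    and x: "x \<in> alat P"
  shows "A x \<in> alat Q"
proof -
  obtain S c where S: "finite S" "S \<subseteq> {v \<in> P. intpt v}" "\<forall>v\<in>S. c v \<in> \<int>" "sum c S = 1" "x = (\<Sum>v\<in>S. c v *\<^sub>R v)"
    using x unfolding alat_def by blast
  have inj: "inj_on A S" using BA S(2) by (metis (no_types, lifting) inj_on_inverseI mem_Collect_eq subset_eq)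
  have "A x = (\<Sum>v\<in>S. c v *\<^sub>R A v)" using aff_comb[OF fl A S(1) S(4), of id] S(5) by simp
  also have "\<dots> = (\<Sum>y\<in>A ` S. c (B y) *\<^sub>R y)"
    using sum.reindex[OF inj, of "\<lambda>y. c (B y) *\<^sub>R y"] BA S(2) by (auto intro!: sum.cong)
  finally have e: "A x = (\<Sum>y\<in>A ` S. c (B y) *\<^sub>R y)" .
  have s1: "(\<Sum>y\<in>A ` S. c (B y)) = 1"
    using sum.reindex[OF inj, of "\<lambda>y. c (B y)"] BA S(2,4) by (auto intro!: trans[OF _ S(4)] sum.cong)
  show ?thesis unfolding alat_def
    by (intro CollectI exI[of _ "A ` S"] exI[of _ "\<lambda>y. c (B y)"] conjI)
       (use S BA AP Ai e s1 in auto)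
qed

lemma alat_inv:
  assumes fl: "linear f" and A: "\<And>x. A x = f x + b" and gl: "linear gB" and B: "\<And>x. B x = gB x + c"
    and BA: "\<And>x. x \<in> P \<Longrightarrow> B (A x) = x"
    and x: "x \<in> alat P"
  shows "B (A x) = x"
proof -
  obtain S cc where S: "finite S" "S \<subseteq> {v \<in> P. intpt v}" "sum cc S = 1" "x = (\<Sum>v\<in>S. cc v *\<^sub>R v)"
    using x unfolding alat_def by blast
  have "A x = (\<Sum>v\<in>S. cc v *\<^sub>R A v)" using aff_comb[OF fl A S(1) S(3), of id] S(4) by simp
  then have "B (A x) = (\<Sum>v\<in>S. cc v *\<^sub>R B (A v))" using aff_comb[OF gl B S(1) S(3), of A] by simp
  also have "\<dots> = x" using S BA by (auto intro!: sum.cong)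
  finally show ?thesis .
qed

lemma GL:
  assumes fl: "linear f" and gl: "linear gB"
    and A: "\<And>x. A x = f x + b" and B: "\<And>y. B y = gB y + c"
    and P: "P = convex hull V" and Q: "Q = convex hull WW"
    and AV: "\<And>v. v \<in> V \<Longrightarrow> A v \<in> Q" and BW: "\<And>w. w \<in> WW \<Longrightarrow> B w \<in> P"
    and BA: "\<And>v. v \<in> V \<Longrightarrow> B (A v) = v" and AB: "\<And>w. w \<in> WW \<Longrightarrow> A (B w) = w"
    and Ai: "\<And>x. intpt x \<Longrightarrow> intpt (A x)" and Bi: "\<And>y. intpt y \<Longrightarrow> intpt (B y)"
  shows "unimod_equiv P Q"
proof -
  have cP: "convex P" and cQ: "convex Q" using P Q by simp_all
  have "convex {x. A x \<in> Q \<and> B (A x) = x}"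
    unfolding convex_def
  proof (intro CollectI ballI allI impI conjI)
    fix x y and u v :: real assume x: "x \<in> {x. A x \<in> Q \<and> B (A x) = x}" and y: "y \<in> {x. A x \<in> Q \<and> B (A x) = x}"
      and uv: "0 \<le> u" "0 \<le> v" "u + v = 1"
    show "A (u *\<^sub>R x + v *\<^sub>R y) \<in> Q" using aff2[OF fl A uv(3)] convexD[OF cQ _ _ uv] x y by simp
    show "B (A (u *\<^sub>R x + v *\<^sub>R y)) = u *\<^sub>R x + v *\<^sub>R y"
      using aff2[OF fl A uv(3)] aff2[OF gl B uv(3)] x y by simp
  qed
  moreover have "V \<subseteq> {x. A x \<in> Q \<and> B (A x) = x}" using AV BA by auto
  ultimately have PP: "P \<subseteq> {x. A x \<in> Q \<and> B (A x) = x}" unfolding P by (rule hull_minimal[rotated])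
  have "convex {y. B y \<in> P \<and> A (B y) = y}"
    unfolding convex_def
  proof (intro CollectI ballI allI impI conjI)
    fix x y and u v :: real assume x: "x \<in> {y. B y \<in> P \<and> A (B y) = y}" and y: "y \<in> {y. B y \<in> P \<and> A (B y) = y}"
      and uv: "0 \<le> u" "0 \<le> v" "u + v = 1"
    show "B (u *\<^sub>R x + v *\<^sub>R y) \<in> P" using aff2[OF gl B uv(3)] convexD[OF cP _ _ uv] x y by simp
    show "A (B (u *\<^sub>R x + v *\<^sub>R y)) = u *\<^sub>R x + v *\<^sub>R y"
      using aff2[OF fl A uv(3)] aff2[OF gl B uv(3)] x y by simp
  qed
  moreover have "WW \<subseteq> {y. B y \<in> P \<and> A (B y) = y}" using BW AB by auto
  ultimately have QQ: "Q \<subseteq> {y. B y \<in> P \<and> A (B y) = y}" unfolding Q by (rule hull_minimal[rotated])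
  have img: "A ` P = Q"
  proof
    show "A ` P \<subseteq> Q" using PP by auto
    show "Q \<subseteq> A ` P"
    proof
      fix y assume "y \<in> Q" then show "y \<in> A ` P" using QQ by (metis (mono_tags, lifting) image_eqI mem_Collect_eq subsetD)
    qed
  qed
  have bij: "bij_betw A (alat P) (alat Q)"
  proof (rule bij_betw_byWitness[where f'=B])
    show "\<forall>x\<in>alat P. B (A x) = x" using alat_inv[OF fl A gl B] PP by blast
    show "\<forall>y\<in>alat Q. A (B y) = y" using alat_inv[OF gl B fl A] QQ by blast
    show "A ` alat P \<subseteq> alat Q" using alat_map[OF fl A _ _ Ai] PP by blast
    show "B ` alat Q \<subseteq> alat P" using alat_map[OF gl B _ _ Bi] QQ by blast
  qed
  have Aeq: "(\<lambda>x. f x + b) = A" using A by auto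
  have "linear f \<and> bij_betw (\<lambda>x. f x + b) (alat P) (alat Q) \<and> (\<lambda>x. f x + b) ` P = Q"
    unfolding Aeq using fl bij img by simp
  then show ?thesis unfolding unimod_equiv_def by blast
qed



context fixes m :: nat begin

lemma min_g_Pp: "r1 \<le> r2 \<Longrightarrow> r2 \<le> m \<Longrightarrow> k < m \<Longrightarrow>
   min 0 (g m k (Pp m r1 r2 r3)) = (if k = r2 - 1 \<and> r1 = r2 \<and> 0 < r2 then -1 else 0)"
  by (auto simp: g_def Pp_tn Pp_X ind_def)

lemma Phi_Pp:
  assumes r: "r1 \<le> r2" "r2 \<le> r3" "r3 \<le> m"
  shows "Phi m m (Pp m r1 r2 r3) = Pp m r1 (if r1 = r2 then 0 else r2) r3"
proof (rule poly_mapping_eqI)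
  fix i
  let ?P = "Pp m r1 r2 r3"
  have s: "(\<Sum>k<m. min 0 (g m k ?P) * lk (W m k) i) = (if r1 = r2 \<and> 0 < r2 then - lk (W m (r2 - 1)) i else 0)"
  proof -
    have "(\<Sum>k<m. min 0 (g m k ?P) * lk (W m k) i) = (\<Sum>k<m. if k = r2 - 1 then (if r1 = r2 \<and> 0 < r2 then - lk (W m k) i else 0) else 0)"
      by (rule sum.cong) (use r in \<open>auto simp: min_g_Pp\<close>)
    also have "\<dots> = (if r1 = r2 \<and> 0 < r2 then - lk (W m (r2-1)) i else 0)"
    proof (cases "r1 = r2 \<and> 0 < r2")
      case True
      then have "r2 - 1 < m" using r by arith
      then show ?thesis using True by (simp add: sum.delta)
    next
      case False
      have "(\<lambda>k. if k = r2 - 1 then (if r1 = r2 \<and> 0 < r2 then - lk (W m k) i else 0) else 0) = (\<lambda>k. 0)"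
        using False by (intro ext) auto
      then show ?thesis using False by auto
    qed
    finally show ?thesis .
  qed
  have "lk (Phi m m ?P) i = lk ?P i + (\<Sum>k<m. min 0 (g m k ?P) * lk (W m k) i)"
    by (simp add: Phi_closed)
  also have "\<dots> = lk ?P i + (if r1 = r2 \<and> 0 < r2 then - lk (W m (r2 - 1)) i else 0)" using s by simp
  also have "\<dots> = lk (Pp m r1 (if r1 = r2 then 0 else r2) r3) i"
    using r by (auto simp: Pp_def W_def ind_def)
  finally show "lk (Phi m m ?P) i = lk (Pp m r1 (if r1 = r2 then 0 else r2) r3) i" .
qed

definition vert :: "nat \<Rightarrow> nat \<Rightarrow> nat \<Rightarrow> pt" where
  "vert p q r = Poly_Mapping.single p 1 + Poly_Mapping.single ((m+3) + q) 1 + Poly_Mapping.single (2*(m+3) + r) 1"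

lemma lk_vert: "lk (vert p q r) k = ind (k = p) + ind (k = (m+3) + q) + ind (k = 2*(m+3) + r)"
  by (auto simp: vert_def lookup_single when_def ind_def)

definition cs :: "pt \<Rightarrow> nat \<Rightarrow> nat \<Rightarrow> real" where
  "cs x r t = (\<Sum>j\<in>{Suc t..<m+3}. lk x (r*(m+3) + j))"

lemma cs_vert:
  assumes "p < m+3" "q < m+3" "r < m+3"
  shows "cs (vert p q r) 0 t = ind (t < p)" "cs (vert p q r) 1 t = ind (t < q)" "cs (vert p q r) 2 t = ind (t < r)"
proof -
  have "cs (vert p q r) 0 t = (\<Sum>j\<in>{Suc t..<m+3}. if j = p then 1 else 0)"
    unfolding cs_def by (rule sum.cong) (use assms in \<open>auto simp: lk_vert ind_def\<close>)
  also have "\<dots> = ind (t < p)" using assms by (simp add: sum.delta ind_def)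
  finally show "cs (vert p q r) 0 t = ind (t < p)" .
  have "cs (vert p q r) 1 t = (\<Sum>j\<in>{Suc t..<m+3}. if j = q then 1 else 0)"
    unfolding cs_def by (rule sum.cong) (use assms in \<open>auto simp: lk_vert ind_def\<close>)
  also have "\<dots> = ind (t < q)" using assms by (simp add: sum.delta ind_def)
  finally show "cs (vert p q r) 1 t = ind (t < q)" .
  have "cs (vert p q r) 2 t = (\<Sum>j\<in>{Suc t..<m+3}. if j = r then 1 else 0)"
    unfolding cs_def by (rule sum.cong) (use assms in \<open>auto simp: lk_vert ind_def\<close>)
  also have "\<dots> = ind (t < r)" using assms by (simp add: sum.delta ind_def)
  finally show "cs (vert p q r) 2 t = ind (t < r)" .
qed

definition enc :: "nat \<Rightarrow> nat \<Rightarrow> nat \<Rightarrow> pt \<Rightarrow> pt" where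
 "enc s0 s1 s2 x = mk (\<lambda>k. if k < m then cs x 0 (s0 + k) else if k < 2*m then cs x 1 (s1 + (k - m)) else cs x 2 (s2 + (k - 2*m))) (3*m)"

lemma enc_vert: "p < m+3 \<Longrightarrow> q < m+3 \<Longrightarrow> r < m+3 \<Longrightarrow> enc s0 s1 s2 (vert p q r) = Pp m (p - s0) (q - s1) (r - s2)"
  by (intro poly_mapping_eqI) (auto simp: enc_def Pp_def cs_vert cs_vert[simplified] ind_def; arith)

lemma enc_lin: "linear (enc s0 s1 s2)"
proof (rule linearI)
  fix x y show "enc s0 s1 s2 (x + y) = enc s0 s1 s2 x + enc s0 s1 s2 y"
    by (intro poly_mapping_eqI) (simp add: enc_def cs_def sum.distrib)
next
  fix c x show "enc s0 s1 s2 (c *\<^sub>R x) = c *\<^sub>R enc s0 s1 s2 x"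
    by (intro poly_mapping_eqI) (simp add: enc_def cs_def sum_distrib_left)
qed

lemma enc_int: "intpt x \<Longrightarrow> intpt (enc s0 s1 s2 x)"
  unfolding intpt_def by (auto simp: enc_def cs_def intro!: Ints_sum)

definition Cc :: "pt \<Rightarrow> nat \<Rightarrow> nat \<Rightarrow> nat \<Rightarrow> real" where
  "Cc y b s t = (if t < s then 1 else if t < s + m then lk y (b*m + (t - s)) else 0)"
definition Dd :: "pt \<Rightarrow> nat \<Rightarrow> nat \<Rightarrow> nat \<Rightarrow> real" where
  "Dd y b s j = (if j = 0 then 1 else Cc y b s (j - 1)) - Cc y b s j"
definition sw :: "nat \<Rightarrow> nat" where "sw j = (if j = 0 then 1 else if j = 1 then 0 else j)"
definition DD :: "bool \<Rightarrow> pt \<Rightarrow> nat \<Rightarrow> real" where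
  "DD e y k = (if k < m+3 then Dd y 0 (if e then 1 else 0) k
      else if k < 2*(m+3) then Dd y 1 1 (if e then sw (k - (m+3)) else k - (m+3))
      else Dd y 2 2 (k - 2*(m+3)))"
definition dec :: "bool \<Rightarrow> pt \<Rightarrow> pt" where "dec e y = mk (DD e y) (3*(m+3))"

lemma Cc_gen:
  assumes r: "r \<le> m" and h: "\<And>i. i < m \<Longrightarrow> lk y (b*m + i) = ind (i < r)"
  shows "Cc y b s t = ind (t < r + s)"
proof (cases "t < s")
  case True then show ?thesis by (simp add: Cc_def ind_def)
next
  case F: False
  show ?thesis
  proof (cases "t < s + m")
    case True
    have "Cc y b s t = lk y (b*m + (t - s))" using True F by (simp add: Cc_def)
    also have "\<dots> = ind (t - s < r)" using h[of "t - s"] True F by simp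
    also have "\<dots> = ind (t < r + s)" using F unfolding ind_def by (cases "t - s < r"; simp; arith)
    finally show ?thesis .
  next
    case False then show ?thesis using F r by (simp add: Cc_def ind_def)
  qed
qed

lemma Dd_gen: assumes "r \<le> m" "\<And>i. i < m \<Longrightarrow> lk y (b*m + i) = ind (i < r)" shows "Dd y b s j = ind (j = r + s)"
proof -
  have C: "\<And>t. Cc y b s t = ind (t < r + s)" by (rule Cc_gen[OF assms])
  show ?thesis
  proof (cases "j = 0")
    case True then show ?thesis by (simp add: Dd_def C ind_def)
  next
    case False
    then have "(j - 1 < r + s) = (j \<le> r + s)" by arith
    then show ?thesis using False by (auto simp: Dd_def C ind_def)
  qed
qed

lemma Dd_Pp:
  assumes "r1 \<le> m" "r2 \<le> m" "r3 \<le> m"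
  shows "Dd (Pp m r1 r2 r3) 0 s j = ind (j = r1 + s)" "Dd (Pp m r1 r2 r3) 1 s j = ind (j = r2 + s)"
    "Dd (Pp m r1 r2 r3) 2 s j = ind (j = r3 + s)"
  by (rule Dd_gen; use assms Pp_X Pp_T Pp_Z in simp)+

lemmas Dd_Pp' = Dd_Pp[simplified]

lemma sw_eq: "(sw j = r + 1) = (j = (if r = 0 then 0 else r + 1))"
  by (auto simp: sw_def)

lemma dec0_Pp: assumes "r1 \<le> m" "r2 \<le> m" "r3 \<le> m"
  shows "dec False (Pp m r1 r2 r3) = vert r1 (r2+1) (r3+2)"
  by (intro poly_mapping_eqI) (use assms in \<open>auto simp: dec_def DD_def Dd_Pp Dd_Pp' lk_vert ind_def; arith\<close>)

lemma dec1_Pp: assumes "r1 \<le> m" "r2 \<le> m" "r3 \<le> m"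
  shows "dec True (Pp m r1 r2 r3) = vert (r1+1) (if r2 = 0 then 0 else r2+1) (r3+2)"
  by (intro poly_mapping_eqI) (use assms in \<open>auto simp: dec_def DD_def Dd_Pp Dd_Pp' lk_vert ind_def sw_def split: if_splits; arith\<close>)

lemma Dd_add: "Dd (x + y) b s j - Dd 0 b s j = (Dd x b s j - Dd 0 b s j) + (Dd y b s j - Dd 0 b s j)"
  by (simp add: Dd_def Cc_def split: if_splits; arith)
lemma Dd_scale: "Dd (c *\<^sub>R x) b s j - Dd 0 b s j = c * (Dd x b s j - Dd 0 b s j)"
  by (simp add: Dd_def Cc_def algebra_simps split: if_splits; arith)

lemma DD_add: "DD e (x + y) k - DD e 0 k = (DD e x k - DD e 0 k) + (DD e y k - DD e 0 k)"
  unfolding DD_def using Dd_add by simp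
lemma DD_scale: "DD e (c *\<^sub>R x) k - DD e 0 k = c * (DD e x k - DD e 0 k)"
  unfolding DD_def using Dd_scale by simp

lemma lk_decd: "lk (dec e y - dec e 0) k = (if k < 3*(m+3) then DD e y k - DD e 0 k else 0)"
  unfolding lookup_minus dec_def lookup_mk by simp

lemma dec_lin: "linear (\<lambda>y. dec e y - dec e 0)"
proof (rule linearI)
  fix x y show "dec e (x + y) - dec e 0 = (dec e x - dec e 0) + (dec e y - dec e 0)"
    by (intro poly_mapping_eqI) (simp only: lookup_add lk_decd DD_add, simp)
next
  fix c x show "dec e (c *\<^sub>R x) - dec e 0 = c *\<^sub>R (dec e x - dec e 0)"
    by (intro poly_mapping_eqI) (simp only: lookup_scaleR lk_decd DD_scale, simp)
qed

lemma dec_int: assumes "intpt y" shows "intpt (dec e y)"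
proof -
  have "Cc y b s t \<in> \<int>" for b s t using assms by (simp add: Cc_def intpt_def)
  then have "Dd y b s j \<in> \<int>" for b s j by (simp add: Dd_def)
  then show ?thesis by (simp add: intpt_def dec_def DD_def)
qed

end


lemma three_sub:
  assumes I: "I \<subseteq> {0..<(n::nat)}" "card I = 3"
  shows "\<exists>a b c. a < b \<and> b < c \<and> c < n \<and> I = {a,b,c}"
proof -
  have fin: "finite I" using I(2) by (intro card_ge_0_finite) simp
  define l where "l = sorted_list_of_set I"
  have len: "length l = 3" using I(2) by (simp add: l_def length_sorted_list_of_set)
  have "\<exists>a b c. l = [a,b,c]" using len by (auto simp: numeral_3_eq_3 length_Suc_conv)
  then obtain a b c where l: "l = [a,b,c]" by blast
  have "sorted_wrt (<) l" by (simp add: l_def strict_sorted_list_of_set)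
  then have ab: "a < b" "b < c" using l by auto
  have "set l = I" using fin by (simp add: l_def set_sorted_list_of_set)
  then have Ie: "I = {a,b,c}" using l by auto
  then have "c < n" using I(1) by auto
  then show ?thesis using ab Ie by blast
qed

lemma mfv: "a < b \<Longrightarrow> b < c \<Longrightarrow> mf_vertex n \<sigma> {a,b,c} = emat n (\<sigma> 0) a + emat n (\<sigma> 1) b + emat n (\<sigma> 2) c"
  by (simp add: mf_vertex_def eval_nat_numeral lessThan_Suc add_ac)

context fixes m :: nat begin

lemma mfv0: "a < b \<Longrightarrow> b < c \<Longrightarrow> mf_vertex (m+3) (block_mf 0 {a,b,c}) {a,b,c} = vert m a b c"
  by (simp add: mfv block_mf_def emat_def vert_def)

lemma mfv1: "a < b \<Longrightarrow> b < c \<Longrightarrow>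
   mf_vertex (m+3) (block_mf 1 {a,b,c}) {a,b,c} = (if a = 0 then vert m b 0 c else vert m a b c)"
proof -
  assume ab: "a < b" "b < c"
  have e: "{a,b,c} \<inter> {0..<1} = (if a = 0 then {0} else {})" using ab by auto
  show ?thesis
  proof (cases "a = 0")
    case True
    then have "block_mf 1 {a,b,c} = Transposition.transpose 0 1" using e by (simp add: block_mf_def)
    then show ?thesis using ab True by (simp add: mfv emat_def vert_def Transposition.transpose_def add_ac)
  next
    case False
    then have "block_mf 1 {a,b,c} = id" using e by (simp add: block_mf_def)
    then show ?thesis using ab False by (simp add: mfv emat_def vert_def)
  qed
qed

definition VB0 where "VB0 = {vert m a b c | a b c. a < b \<and> b < c \<and> c < m+3}"
definition VB1 where "VB1 = {vert m a b c | a b c. 0 < a \<and> a < b \<and> b < c \<and> c < m+3} \<union> {vert m b 0 c | b c. 0 < b \<and> b < c \<and> c < m+3}"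

lemma VB0_eq: "{mf_vertex (m+3) (block_mf 0 I) I | I. I \<subseteq> {0..<m+3} \<and> card I = 3} = VB0"
proof (intro equalityI subsetI)
  fix v assume "v \<in> {mf_vertex (m+3) (block_mf 0 I) I | I. I \<subseteq> {0..<m+3} \<and> card I = 3}"
  then obtain I where I: "I \<subseteq> {0..<m+3}" "card I = 3" "v = mf_vertex (m+3) (block_mf 0 I) I" by blast
  obtain a b c where abc: "a<b" "b<c" "c<m+3" "I = {a,b,c}" using three_sub[OF I(1,2)] by blast
  have "v = vert m a b c" using I(3) abc mfv0[of a b c] by simp
  then show "v \<in> VB0" unfolding VB0_def using abc by (intro CollectI exI[of _ a] exI[of _ b] exI[of _ c]) simp
next
  fix v assume "v \<in> VB0"
  then obtain a b c where abc: "a<b" "b<c" "c<m+3" "v = vert m a b c" unfolding VB0_def by blast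
  have "card {a,b,c} = 3" "{a,b,c} \<subseteq> {0..<m+3}" using abc by auto
  then show "v \<in> {mf_vertex (m+3) (block_mf 0 I) I | I. I \<subseteq> {0..<m+3} \<and> card I = 3}"
    using mfv0[of a b c] abc by (intro CollectI exI[of _ "{a,b,c}"]) simp
qed

lemma VB1_eq: "{mf_vertex (m+3) (block_mf 1 I) I | I. I \<subseteq> {0..<m+3} \<and> card I = 3} = VB1"
proof (intro equalityI subsetI)
  fix v assume "v \<in> {mf_vertex (m+3) (block_mf 1 I) I | I. I \<subseteq> {0..<m+3} \<and> card I = 3}"
  then obtain I where I: "I \<subseteq> {0..<m+3}" "card I = 3" "v = mf_vertex (m+3) (block_mf 1 I) I" by blast
  obtain a b c where abc: "a<b" "b<c" "c<m+3" "I = {a,b,c}" using three_sub[OF I(1,2)] by blast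
  show "v \<in> VB1"
  proof (cases "a = 0")
    case True
    then have "v = vert m b 0 c" using I(3) mfv1[of a b c] abc by simp
    then show ?thesis using abc True unfolding VB1_def by (intro UnI2 CollectI exI[of _ b] exI[of _ c]) simp
  next
    case False
    then have "v = vert m a b c" using I(3) mfv1[of a b c] abc by simp
    then show ?thesis using abc False unfolding VB1_def by (intro UnI1 CollectI exI[of _ a] exI[of _ b] exI[of _ c]) simp
  qed
next
  fix v assume "v \<in> VB1"
  then consider (x) a b c where "0 < a" "a<b" "b<c" "c<m+3" "v = vert m a b c"
    | (y) b c where "0 < b" "b<c" "c<m+3" "v = vert m b 0 c" unfolding VB1_def by blast
  then show "v \<in> {mf_vertex (m+3) (block_mf 1 I) I | I. I \<subseteq> {0..<m+3} \<and> card I = 3}"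
  proof cases
    case x
    have "card {a,b,c} = 3" "{a,b,c} \<subseteq> {0..<m+3}" using x by auto
    then show ?thesis using mfv1[of a b c] x by (intro CollectI exI[of _ "{a,b,c}"]) auto
  next
    case y
    have "card {0,b,c} = 3" "{0,b,c} \<subseteq> {0..<m+3}" using y by auto
    then show ?thesis using mfv1[of 0 b c] y by (intro CollectI exI[of _ "{0,b,c}"]) auto
  qed
qed

lemma vert_lat: "p < m+3 \<Longrightarrow> q < m+3 \<Longrightarrow> r < m+3 \<Longrightarrow> vert m p q r \<in> lat (3*(m+3))"
  unfolding lat_def rsp_def intpt_def by (auto simp: lk_vert ind_def)

lemma finite_VB0: "finite VB0"
proof -
  have "VB0 \<subseteq> (\<lambda>(a,b,c). vert m a b c) ` ({..<m+3} \<times> {..<m+3} \<times> {..<m+3})"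
  proof
    fix x assume "x \<in> VB0"
    then obtain a b c where r: "a<b" "b<c" "c<m+3" "x = vert m a b c" unfolding VB0_def by blast
    then show "x \<in> (\<lambda>(a,b,c). vert m a b c) ` ({..<m+3} \<times> {..<m+3} \<times> {..<m+3})"
      by (intro rev_image_eqI[of "(a,b,c)"]) auto
  qed
  then show ?thesis by (rule finite_subset) simp
qed

lemma finite_VB1: "finite VB1"
proof -
  have "VB1 \<subseteq> (\<lambda>(a,b,c). vert m a b c) ` ({..<m+3} \<times> {..<m+3} \<times> {..<m+3})"
  proof
    fix x assume "x \<in> VB1"
    then consider (x) a b c where "0 < a" "a<b" "b<c" "c<m+3" "x = vert m a b c"
      | (y) b c where "0 < b" "b<c" "c<m+3" "x = vert m b 0 c" unfolding VB1_def by blast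
    then show "x \<in> (\<lambda>(a,b,c). vert m a b c) ` ({..<m+3} \<times> {..<m+3} \<times> {..<m+3})"
    proof cases
      case x then show ?thesis by (intro rev_image_eqI[of "(a,b,c)"]) auto
    next
      case y then show ?thesis by (intro rev_image_eqI[of "(b,0,c)"]) auto
    qed
  qed
  then show ?thesis by (rule finite_subset) simp
qed

lemma lp_VB0: "lattice_polytope (convex hull VB0)"
  unfolding lattice_polytope_def lattice_polytope_in_def
proof (intro exI conjI)
  show "finite VB0" by (rule finite_VB0)
  have "vert m 0 1 2 \<in> VB0" unfolding VB0_def by (intro CollectI exI[of _ 0] exI[of _ 1] exI[of _ 2]) simp
  then show "VB0 \<noteq> {}" by blast
  show "VB0 \<subseteq> lat (3*(m+3))" unfolding VB0_def using vert_lat by auto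
qed simp

lemma lp_VB1: "lattice_polytope (convex hull VB1)"
  unfolding lattice_polytope_def lattice_polytope_in_def
proof (intro exI conjI)
  show "finite VB1" by (rule finite_VB1)
  have "vert m 1 0 2 \<in> VB1" unfolding VB1_def by (intro UnI2 CollectI exI[of _ 1] exI[of _ 2]) simp
  then show "VB1 \<noteq> {}" by blast
  show "VB1 \<subseteq> lat (3*(m+3))" unfolding VB1_def using vert_lat by auto
qed simp

end


context fixes m :: nat begin

lemma H0_hull: "H m 0 = convex hull (V0 m)"
  using H_conv[of 0 m] by simp

lemma P0_eq: "matching_field_polytope (m+3) (block_mf 0) = convex hull (VB0 m)"
  unfolding matching_field_polytope_def VB0_eq ..

lemma P1_eq: "matching_field_polytope (m+3) (block_mf 1) = convex hull (VB1 m)"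
  unfolding matching_field_polytope_def VB1_eq ..

lemma E0: "unimod_equiv (matching_field_polytope (m+3) (block_mf 0)) (H m 0)"
proof (rule GL[OF enc_lin dec_lin])
  show "\<And>x. enc m 0 1 2 x = enc m 0 1 2 x + 0" by simp
  show "\<And>y. dec m False y = (dec m False y - dec m False 0) + dec m False 0" by simp
  show "matching_field_polytope (m+3) (block_mf 0) = convex hull (VB0 m)" by (rule P0_eq)
  show "H m 0 = convex hull (V0 m)" by (rule H0_hull)
  show "intpt x \<Longrightarrow> intpt (enc m 0 1 2 x)" for x by (rule enc_int)
  show "intpt y \<Longrightarrow> intpt (dec m False y)" for y by (rule dec_int)
  fix v assume "v \<in> VB0 m"
  then obtain a b c where abc: "a<b" "b<c" "c<m+3" "v = vert m a b c" unfolding VB0_def by blast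
  have ev: "enc m 0 1 2 v = Pp m a (b-1) (c-2)" using abc enc_vert by simp
  show "enc m 0 1 2 v \<in> H m 0" unfolding ev by (rule Pp_H) (use abc in auto)
  have c2: "Suc (Suc (c - 2)) = c" using abc by arith
  show "dec m False (enc m 0 1 2 v) = v" unfolding ev using abc c2 dec0_Pp[of a m "b-1" "c-2"] by simp
next
  fix w assume "w \<in> V0 m"
  then obtain r1 r2 r3 where r: "r1 \<le> r2" "r2 \<le> r3" "r3 \<le> m" "w = Pp m r1 r2 r3" unfolding V0_eq by blast
  have dw: "dec m False w = vert m r1 (r2+1) (r3+2)" using r dec0_Pp by simp
  have "vert m r1 (r2+1) (r3+2) \<in> VB0 m" unfolding VB0_def using r
    by (intro CollectI exI[of _ r1] exI[of _ "r2+1"] exI[of _ "r3+2"]) simp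
  then show "dec m False w \<in> matching_field_polytope (m+3) (block_mf 0)"
    unfolding dw P0_eq by (rule hull_inc)
  show "enc m 0 1 2 (dec m False w) = w" unfolding dw using r enc_vert by simp
qed

lemma E1: "unimod_equiv (H m m) (matching_field_polytope (m+3) (block_mf 1))"
proof -
  have BWAB: "enc m 1 1 2 w \<in> H m m \<and> dec m True (enc m 1 1 2 w) = w" if "w \<in> VB1 m" for w
  proof -
  have PhiH: "Phi m m ` V0 m \<subseteq> H m m" using H_Phi[of m m] by (auto simp: V0_def)
  have HH: "H m m = convex hull (Phi m m ` V0 m)" by (rule H_conv) simp
  from that consider (x) a b c where "0 < a" "a<b" "b<c" "c<m+3" "w = vert m a b c"
      | (y) b c where "0 < b" "b<c" "c<m+3" "w = vert m b 0 c" unfolding VB1_def by blast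
  then show "enc m 1 1 2 w \<in> H m m \<and> dec m True (enc m 1 1 2 w) = w"
  proof cases
    case x
    have c2: "Suc (Suc (c - 2)) = c" using x by arith
    have ew: "enc m 1 1 2 w = Pp m (a-1) (b-1) (c-2)" using x enc_vert by simp
    have "Phi m m (Pp m (a-1) (b-1) (c-2)) = Pp m (a-1) (b-1) (c-2)" using x Phi_Pp[of "a-1" "b-1" "c-2" m] by simp
    moreover have "Pp m (a-1) (b-1) (c-2) \<in> V0 m" unfolding V0_eq using x
      by (intro CollectI exI[of _ "a-1"] exI[of _ "b-1"] exI[of _ "c-2"]) auto
    ultimately have "Pp m (a-1) (b-1) (c-2) \<in> H m m" using PhiH by (metis image_eqI subsetD)
    moreover have "dec m True (Pp m (a-1) (b-1) (c-2)) = w" using x c2 dec1_Pp[of "a-1" m "b-1" "c-2"] by simp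
    ultimately show ?thesis using ew by simp
  next
    case y
    have c2: "Suc (Suc (c - 2)) = c" using y by arith
    have ew: "enc m 1 1 2 w = Pp m (b-1) 0 (c-2)" using y enc_vert by simp
    have "Phi m m (Pp m (b-1) (b-1) (c-2)) = Pp m (b-1) 0 (c-2)" using y Phi_Pp[of "b-1" "b-1" "c-2" m] by simp
    moreover have "Pp m (b-1) (b-1) (c-2) \<in> V0 m" unfolding V0_eq using y
      by (intro CollectI exI[of _ "b-1"] exI[of _ "b-1"] exI[of _ "c-2"]) auto
    ultimately have "Pp m (b-1) 0 (c-2) \<in> H m m" using PhiH by (metis image_eqI subsetD)
    moreover have "dec m True (Pp m (b-1) 0 (c-2)) = w" using y c2 dec1_Pp[of "b-1" m 0 "c-2"] by simp
    ultimately show ?thesis using ew by simp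
  qed
  qed
  show ?thesis
proof (rule GL[OF dec_lin enc_lin])
  show "\<And>y. dec m True y = (dec m True y - dec m True 0) + dec m True 0" by simp
  show "\<And>x. enc m 1 1 2 x = enc m 1 1 2 x + 0" by simp
  show "H m m = convex hull (Phi m m ` V0 m)" by (rule H_conv) simp
  show "matching_field_polytope (m+3) (block_mf 1) = convex hull (VB1 m)" by (rule P1_eq)
  show "intpt x \<Longrightarrow> intpt (enc m 1 1 2 x)" for x by (rule enc_int)
  show "intpt y \<Longrightarrow> intpt (dec m True y)" for y by (rule dec_int)
  have PhiH: "Phi m m ` V0 m \<subseteq> H m m" using H_Phi[of m m] by (auto simp: V0_def)
  fix v assume "v \<in> Phi m m ` V0 m"
  then obtain r1 r2 r3 where r: "r1 \<le> r2" "r2 \<le> r3" "r3 \<le> m" "v = Phi m m (Pp m r1 r2 r3)" unfolding V0_eq by blast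
  define r2' where "r2' = (if r1 = r2 then 0 else r2)"
  have ve: "v = Pp m r1 r2' r3" using r Phi_Pp by (simp add: r2'_def)
  have r2'm: "r2' \<le> m" using r by (simp add: r2'_def)
  have dv: "dec m True v = vert m (r1+1) (if r2' = 0 then 0 else r2'+1) (r3+2)" unfolding ve using r r2'm dec1_Pp by simp
  have "vert m (r1+1) (if r2' = 0 then 0 else r2'+1) (r3+2) \<in> VB1 m"
  proof (cases "r1 = r2")
    case True
    then have "r2' = 0" by (simp add: r2'_def)
    then show ?thesis unfolding VB1_def using r by (intro UnI2 CollectI exI[of _ "r1+1"] exI[of _ "r3+2"]) simp
  next
    case False
    then have "r2' = r2" "r1 < r2" using r by (auto simp: r2'_def)
    then show ?thesis unfolding VB1_def using r by (intro UnI1 CollectI exI[of _ "r1+1"] exI[of _ "r2+1"] exI[of _ "r3+2"]) simp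
  qed
  then show "dec m True v \<in> matching_field_polytope (m+3) (block_mf 1)"
    unfolding dv P1_eq by (rule hull_inc)
  have "(if r2' = 0 then 0 else r2'+1) - 1 = r2'" by simp
  then show "enc m 1 1 2 (dec m True v) = v" unfolding dv using r r2'm enc_vert ve by simp
next
  fix w assume "w \<in> VB1 m"
  then show "enc m 1 1 2 w \<in> H m m" "dec m True (enc m 1 1 2 w) = w" using BWAB by auto
qed
qed

end

theorem theorem3p4:
  fixes n :: nat
  assumes "n \<ge> 3"
  shows "mutation_sequence_equiv (matching_field_polytope n (block_mf 0))
                                 (matching_field_polytope n (block_mf 1))"
proof -
  define m where "m = n - 3"
  have n: "n = m + 3" using assms by (simp add: m_def)
  define P0 where "P0 = matching_field_polytope n (block_mf 0)"
  define P1 where "P1 = matching_field_polytope n (block_mf 1)"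
  define Qf where "Qf i = (if i = 0 then P0 else if i \<le> m + 1 then H m (i - 1) else P1)" for i
  define Ps where "Ps = map Qf [0..<m+3]"
  have len: "length Ps = m + 3" by (simp add: Ps_def)
  have nth: "i < m + 3 \<Longrightarrow> Ps ! i = Qf i" for i by (simp add: Ps_def)
  have lpP0: "lattice_polytope P0" unfolding P0_def n P0_eq by (rule lp_VB0)
  have lpP1: "lattice_polytope P1" unfolding P1_def n P1_eq by (rule lp_VB1)
  have lpH: "j \<le> m \<Longrightarrow> lattice_polytope (H m j)" for j
    using lat_poly_H[of j m] by (auto simp: lattice_polytope_def)
  show ?thesis unfolding mutation_sequence_equiv_def P0_def[symmetric] P1_def[symmetric]
  proof (intro exI[of _ Ps] conjI allI impI ballI)
    show "Ps \<noteq> []" by (simp add: Ps_def)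
    show "hd Ps = P0" by (simp add: Ps_def Qf_def upt_conv_Cons)
    show "last Ps = P1" by (simp add: Ps_def Qf_def last_map)
  next
    fix Q assume "Q \<in> set Ps"
    then obtain i where i: "i < m + 3" "Q = Qf i" by (auto simp: Ps_def)
    show "lattice_polytope Q" using i lpP0 lpP1 lpH[of "i - 1"] by (auto simp: Qf_def)
  next
    fix i assume "Suc i < length Ps"
    then have i: "Suc i < m + 3" using len by simp
    show "related (Ps ! i) (Ps ! Suc i)"
    proof (cases "i = 0")
      case True
      then have "Ps ! i = P0" "Ps ! Suc i = H m 0" using nth i by (auto simp: Qf_def)
      then show ?thesis using E0[of m] by (simp add: related_def P0_def n)
    next
      case F: False
      show ?thesis
      proof (cases "i \<le> m")
        case True
        then have "Ps ! i = H m (i - 1)" "Ps ! Suc i = H m (Suc (i - 1))" using nth i F by (auto simp: Qf_def)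
        moreover have "i - 1 < m" using True F by simp
        ultimately show ?thesis using mut_step[of "i - 1" m] by (simp add: related_def)
      next
        case False
        then have "i = m + 1" using i by simp
        then have "Ps ! i = H m m" "Ps ! Suc i = P1" using nth i by (auto simp: Qf_def)
        then show ?thesis using E1[of m] by (simp add: related_def P1_def n)
      qed
    qed
  qed
qed


end
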